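(* Suppose the network connectivity assumption and the Poincaré scaling assumption hold, and that for the given $H\in\mathcal H$ and $\ell\in\mathbb N$ the family $\{g_{T,\ell}:T\in\mathcal T_H\}$ satisfies the Riesz stability assumption with constant $C_{\mathrm r}(H,\ell)$. Then there exist constants $C,C'>0$, independent of $H$, $\ell$ and $f$ (depending only on $d,\alpha,\beta,\mu,C_{\mathrm{fr}}$, where $C_{\mathrm{fr}}$ is a constant with $|v|_M\le C_{\mathrm{fr}}|v|_L$ for all $v\in V$), such that for all $f\in\hat V$, with $u=\mathcal K^{-1}f$ and $u_{H,\ell}$ the SLOD approximation, $$|u-u_{H,\ell}|_L\le C\big(H|f-\Pi_Hf|_M+C_{\mathrm r}^{1/2}(H,\ell)\,\ell^{d/2}\,\sigma(H,\ell)\,|f|_M\big)\le C'\big(H^2|f|_L+C_{\mathrm r}^{1/2}(H,\ell)\,\ell^{d/2}\,\sigma(H,\ell)\,|f|_M\big).$$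
   Context: Let $d\in\mathbb N$, $\Omega=[0,1]^d$, and let $\mathcal G=(\mathcal N,\mathcal E)$ be a finite connected graph with at least two nodes, whose nodes $\mathcal N$ are distinct points of $\Omega$. Write $x\sim y$ if $\{x,y\}\in\mathcal E$, and $|x-y|$ for the Euclidean distance. For $\omega\subset\Omega$ let $\mathcal N(\omega)=\mathcal N\cap\omega$. Let $\Gamma\subset\partial\Omega$ with $\mathcal N(\Gamma)\neq\emptyset$. $\hat V$ is the space of real functions on $\mathcal N$ with $(u,v)=\sum_xu(x)v(x)$; $V=\{v\in\hat V:v=0\text{ on }\mathcal N(\Gamma)\}$; $\hat V_\omega,V_\omega$ are the functions in $\hat V$, resp. $V$, vanishing outside $\mathcal N(\omega)$; $\tilde V_\omega$ is the subspace of $V$ of functions vanishing at every node that is neither in $\mathcal N(\omega)$ nor adjacent to a node of $\mathcal N(\omega)$. Symmetric operators: $(M_xv,w)=\tfrac12\sum_{y\sim x}|x-y|v(x)w(x)$, $(L_xv,w)=\tfrac12\sum_{y\sim x}\frac{(v(x)-v(y))(w(x)-w(y))}{|x-y|}$, $(K_xv,w)=\tfrac12\sum_{y\sim x}\gamma_{xy}\frac{(v(x)-v(y))(w(x)-w(y))}{|x-y|}$ with $\gamma_{xy}=\gamma_{yx}\in[\alpha,\beta]$, $0<\alpha\le\beta<\infty$; $M,L,K$ are sums over all $x\in\mathcal N$, $M_\omega,L_\omega,K_\omega$ sums over $x\in\mathcal N(\omega)$. Seminorms $|v|_M^2=(Mv,v)$, $|v|_L^2=(Lv,v)$, $|v|_{M,\omega}^2=(M_\omega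 v,v)$, $|v|_{L,\omega}^2=(L_\omega v,v)$, $|v|_{V,\omega}^2=|v|_{M,\omega}^2+|v|_{L,\omega}^2$. $\mathcal K^{-1}:\hat V\to V$ maps $f$ to the unique $u\in V$ with $(Ku,v)=(Mf,v)$ $\forall v\in V$; $\mathcal K_\omega^{-1}:\hat V_\omega\to V_\omega$ maps $g$ to the unique $\varphi\in V_\omega$ with $(K_\omega\varphi,v)=(M_\omega g,v)$ $\forall v\in V_\omega$. Mesh: for $H>0$ with $1/H\in\mathbb N$, $\mathcal T_H$ consists of the cubes $I_1\times\dots\times I_d$, $I_i=[a_i,a_i+H)$, $a_i\in\{0,H,\dots,1-H\}$, except $I_i=[a_i,a_i+H]$ when $a_i+H=1$. $\mathsf N(\omega)$ is the union of all $T\in\mathcal T_H$ with $\overline T\cap\overline\omega\neq\emptyset$; $\mathsf N^1=\mathsf N$, $\mathsf N^\ell(\omega)=\mathsf N(\mathsf N^{\ell-1}(\omega))$. $\mathcal H$ is a finite set of admissible mesh sizes. $\mathbf 1_T$ is the indicator of nodes in $T$; $\mathbb P^0(\mathcal T_H)=\mathrm{span}\{\mathbf 1_T:T\in\mathcal T_H\}$; $\Pi_Hv=\sum_T\frac{(M_Tv,1)}{|1|_{M,T}^2}\mathbf 1_T$ (term $0$ if $T$ has no node). Network connectivity assumption: for every $H\in\mathcal H$, $T\in\mathcal T_H$ there is a connected subgraph of $\mathcal G$ containing all edges with at least one endpoint in $T$ and only edges with both endpoints in $\mathsf N(T)$. Poincaré scaling assumption: there is $\mu>0$ such that for all $H\in\mathcal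 H$, $T\in\mathcal T_H$, $v\in\hat V$ there is $c\in\mathbb R$ with $|v-c|_{M,T}\le\mu H|v|_{L,\mathsf N(T)}$. SLOD construction: fix $H\in\mathcal H$, $\ell\in\mathbb N$. For $T\in\mathcal T_H$ let $\omega=\mathsf N^\ell(T)$ and $\mathbb P^0(\mathcal T_{H,\omega})=\mathrm{span}\{\mathbf 1_{T'}:T'\in\mathcal T_H,\ T'\subset\omega\}$. For $q\in\mathbb P^0(\mathcal T_{H,\omega})$, let $\varphi_q=\mathcal K_\omega^{-1}q$, let $B_\omega\varphi_q$ be the functional $v\mapsto(K\varphi_q,v)-(Mq,v)$ on $\tilde V_\omega$, and let $\mathcal Rq\in\tilde V_\omega$ be the unique solution of $((L_\omega+M_\omega)\mathcal Rq,v)=(B_\omega\varphi_q,v)$ for all $v\in\tilde V_\omega$. Let $g_{T,\ell}$ be a minimizer of $q\mapsto|\mathcal Rq|_{V,\omega}^2/|q|_{M,\omega}^2$ over $q\in\mathbb P^0(\mathcal T_{H,\omega})$ with $|q|_{M,\omega}\ne 0$, normalized by $|g_{T,\ell}|_{M,\omega}=1$; set $\varphi_{T,\ell}=\mathcal K_\omega^{-1}g_{T,\ell}$, $\sigma_T(H,\ell)=|\mathcal Rg_{T,\ell}|_{V,\omega}$, and $\sigma(H,\ell)=\max_{T\in\mathcal T_H}\sigma_T(H,\ell)$. Let $V_{H,\ell}=\mathrm{span}\{\varphi_{T,\ell}:T\in\mathcal T_H\}$; the SLOD approximation $u_{H,\ell}\in V_{H,\ell}$ satisfies $(Ku_{H,\ell},v)=(Mf,v)$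 for all $v\in V_{H,\ell}$. Riesz stability assumption: there is $C_{\mathrm r}(H,\ell)>0$ such that for all real coefficients $(c_T)_{T\in\mathcal T_H}$, $C_{\mathrm r}^{-1}\sum_Tc_T^2\le|\sum_Tc_Tg_{T,\ell}|_M^2\le C_{\mathrm r}\sum_Tc_T^2$. *)

theory Defs
  imports "HOL-Analysis.Analysis"
begin

text \<open>Nodes are points of real^'n (so d = CARD('n)); E is the (symmetric) adjacency relation.
Grid functions are real-valued functions on points; only their values on the node set Nd matter.\<close>

definition Omega :: "(real^'n) set" where
  "Omega = {x. \<forall>i. 0 \<le> x$i \<and> x$i \<le> 1}"

definition network :: "(real^'n) set \<Rightarrow> (real^'n \<Rightarrow> real^'n \<Rightarrow> bool) \<Rightarrow> bool" where
  "network Nd E \<longleftrightarrow> finite Nd \<and> Nd \<subseteq> Omega \<and> card Nd \<ge> 2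
     \<and> (\<forall>x y. E x y \<longrightarrow> x \<in> Nd \<and> y \<in> Nd \<and> x \<noteq> y \<and> E y x)
     \<and> (\<forall>x\<in>Nd. \<forall>y\<in>Nd. E\<^sup>*\<^sup>* x y)"

text \<open>(M_omega v, w), (L_omega v, w), (K_omega v, w): sums over nodes x in omega of the local forms.
Use omega = UNIV for M, L, K.\<close>

definition Mform :: "('a::metric_space \<Rightarrow> 'a \<Rightarrow> bool) \<Rightarrow> 'a set \<Rightarrow> 'a set
    \<Rightarrow> ('a \<Rightarrow> real) \<Rightarrow> ('a \<Rightarrow> real) \<Rightarrow> real" where
  "Mform E Nd \<omega> v w = (\<Sum>x\<in>Nd \<inter> \<omega>. (1/2) * (\<Sum>y\<in>{y. E x y}. dist x y * v x * w x))"

definition Lform :: "('a::metric_space \<Rightarrow> 'a \<Rightarrow> bool) \<Rightarrow> 'a set \<Rightarrow> 'a set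
    \<Rightarrow> ('a \<Rightarrow> real) \<Rightarrow> ('a \<Rightarrow> real) \<Rightarrow> real" where
  "Lform E Nd \<omega> v w = (\<Sum>x\<in>Nd \<inter> \<omega>. (1/2) *
      (\<Sum>y\<in>{y. E x y}. (v x - v y) * (w x - w y) / dist x y))"

definition Kform :: "('a \<Rightarrow> 'a \<Rightarrow> real) \<Rightarrow> ('a::metric_space \<Rightarrow> 'a \<Rightarrow> bool) \<Rightarrow> 'a set \<Rightarrow> 'a set
    \<Rightarrow> ('a \<Rightarrow> real) \<Rightarrow> ('a \<Rightarrow> real) \<Rightarrow> real" where
  "Kform \<gamma> E Nd \<omega> v w = (\<Sum>x\<in>Nd \<inter> \<omega>. (1/2) *
      (\<Sum>y\<in>{y. E x y}. \<gamma> x y * (v x - v y) * (w x - w y) / dist x y))"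

definition semi :: "(('a \<Rightarrow> real) \<Rightarrow> ('a \<Rightarrow> real) \<Rightarrow> real) \<Rightarrow> ('a \<Rightarrow> real) \<Rightarrow> real" where
  "semi F v = sqrt (F v v)"

definition Vnorm :: "('a::metric_space \<Rightarrow> 'a \<Rightarrow> bool) \<Rightarrow> 'a set \<Rightarrow> 'a set \<Rightarrow> ('a \<Rightarrow> real) \<Rightarrow> real" where
  "Vnorm E Nd \<omega> v = sqrt (Mform E Nd \<omega> v v + Lform E Nd \<omega> v v)"

definition hatV :: "'a set \<Rightarrow> ('a \<Rightarrow> real) set" where
  "hatV Nd = {v. \<forall>x. x \<notin> Nd \<longrightarrow> v x = 0}"

definition Vsp :: "'a set \<Rightarrow> 'a set \<Rightarrow> ('a \<Rightarrow> real) set" where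
  "Vsp Nd \<Gamma> = {v \<in> hatV Nd. \<forall>x\<in>Nd \<inter> \<Gamma>. v x = 0}"

definition Vloc :: "'a set \<Rightarrow> 'a set \<Rightarrow> 'a set \<Rightarrow> ('a \<Rightarrow> real) set" where
  "Vloc Nd \<Gamma> \<omega> = {v \<in> Vsp Nd \<Gamma>. \<forall>x\<in>Nd. x \<notin> \<omega> \<longrightarrow> v x = 0}"

definition Vtilde :: "('a \<Rightarrow> 'a \<Rightarrow> bool) \<Rightarrow> 'a set \<Rightarrow> 'a set \<Rightarrow> 'a set \<Rightarrow> ('a \<Rightarrow> real) set" where
  "Vtilde E Nd \<Gamma> \<omega> = {v \<in> Vsp Nd \<Gamma>.
      \<forall>x\<in>Nd. (x \<notin> \<omega> \<and> \<not> (\<exists>y\<in>Nd \<inter> \<omega>. E x y)) \<longrightarrow> v x = 0}"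

definition Kinv :: "('a \<Rightarrow> 'a \<Rightarrow> real) \<Rightarrow> ('a::metric_space \<Rightarrow> 'a \<Rightarrow> bool) \<Rightarrow> 'a set \<Rightarrow> 'a set
    \<Rightarrow> ('a \<Rightarrow> real) \<Rightarrow> ('a \<Rightarrow> real)" where
  "Kinv \<gamma> E Nd \<Gamma> f = (THE u. u \<in> Vsp Nd \<Gamma> \<and>
      (\<forall>v\<in>Vsp Nd \<Gamma>. Kform \<gamma> E Nd UNIV u v = Mform E Nd UNIV f v))"

definition Kinv_loc :: "('a \<Rightarrow> 'a \<Rightarrow> real) \<Rightarrow> ('a::metric_space \<Rightarrow> 'a \<Rightarrow> bool) \<Rightarrow> 'a set \<Rightarrow> 'a set
    \<Rightarrow> 'a set \<Rightarrow> ('a \<Rightarrow> real) \<Rightarrow> ('a \<Rightarrow> real)" where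
  "Kinv_loc \<gamma> E Nd \<Gamma> \<omega> g = (THE \<phi>. \<phi> \<in> Vloc Nd \<Gamma> \<omega> \<and>
      (\<forall>v\<in>Vloc Nd \<Gamma> \<omega>. Kform \<gamma> E Nd \<omega> \<phi> v = Mform E Nd \<omega> g v))"

text \<open>R q: the unique element of tilde V_omega with ((L_omega + M_omega) R q, v) = (B_omega phi_q, v)
  for all v in tilde V_omega, where phi_q = K_omega^{-1} q and (B_omega phi_q, v) = (K phi_q, v) - (M q, v).\<close>
definition Rop :: "('a \<Rightarrow> 'a \<Rightarrow> real) \<Rightarrow> ('a::metric_space \<Rightarrow> 'a \<Rightarrow> bool) \<Rightarrow> 'a set \<Rightarrow> 'a set
    \<Rightarrow> 'a set \<Rightarrow> ('a \<Rightarrow> real) \<Rightarrow> ('a \<Rightarrow> real)" where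
  "Rop \<gamma> E Nd \<Gamma> \<omega> q = (THE r. r \<in> Vtilde E Nd \<Gamma> \<omega> \<and>
      (\<forall>v\<in>Vtilde E Nd \<Gamma> \<omega>. Lform E Nd \<omega> r v + Mform E Nd \<omega> r v
         = Kform \<gamma> E Nd UNIV (Kinv_loc \<gamma> E Nd \<Gamma> \<omega> q) v - Mform E Nd UNIV q v))"

definition cube :: "real \<Rightarrow> ('n \<Rightarrow> nat) \<Rightarrow> (real^'n) set" where
  "cube H a = {x. \<forall>i. real (a i) * H \<le> x$i \<and>
      (x$i < real (a i + 1) * H \<or> (real (a i + 1) * H = 1 \<and> x$i \<le> 1))}"

definition mesh :: "real \<Rightarrow> (real^'n) set set" where
  "mesh H = {cube H a | a. \<forall>i. real (a i + 1) * H \<le> 1}"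

definition patch :: "real \<Rightarrow> (real^'n) set \<Rightarrow> (real^'n) set" where
  "patch H \<omega> = \<Union>{T \<in> mesh H. closure T \<inter> closure \<omega> \<noteq> {}}"

definition patchn :: "real \<Rightarrow> nat \<Rightarrow> (real^'n) set \<Rightarrow> (real^'n) set" where
  "patchn H l \<omega> = (patch H ^^ l) \<omega>"

definition ind :: "'a set \<Rightarrow> 'a set \<Rightarrow> 'a \<Rightarrow> real" where
  "ind Nd T x = (if x \<in> Nd \<and> x \<in> T then 1 else 0)"

definition P0 :: "(real^'n) set \<Rightarrow> real \<Rightarrow> (real^'n) set \<Rightarrow> (real^'n \<Rightarrow> real) set" where
  "P0 Nd H \<omega> = {q. \<exists>c. q = (\<lambda>x. \<Sum>T\<in>{T \<in> mesh H. T \<subseteq> \<omega>}. c T * ind Nd T x)}"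

text \<open>Pi_H v = sum_T (M_T v, 1)/|1|_{M,T}^2 1_T (term 0 if denominator vanishes, as x/0 = 0)\<close>
definition PiH :: "(real^'n \<Rightarrow> real^'n \<Rightarrow> bool) \<Rightarrow> (real^'n) set \<Rightarrow> real
    \<Rightarrow> (real^'n \<Rightarrow> real) \<Rightarrow> (real^'n \<Rightarrow> real)" where
  "PiH E Nd H v = (\<lambda>x. \<Sum>T\<in>mesh H.
      (Mform E Nd T v (\<lambda>_. 1) / (semi (Mform E Nd T) (\<lambda>_. 1))^2) * ind Nd T x)"

text \<open>Network connectivity assumption; a subgraph is given by a symmetric set S of (directed copies of) edges,
  connected meaning any two of its vertices are joined by a path in S.\<close>
definition connectivity_assm :: "(real^'n) set \<Rightarrow> (real^'n \<Rightarrow> real^'n \<Rightarrow> bool) \<Rightarrow> real set \<Rightarrow> bool" where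
  "connectivity_assm Nd E Hs \<longleftrightarrow> (\<forall>H\<in>Hs. \<forall>T\<in>mesh H. \<exists>S.
      S \<subseteq> {(x, y). E x y} \<and> sym S \<and> (\<forall>a\<in>Field S. \<forall>b\<in>Field S. (a, b) \<in> S\<^sup>*)
      \<and> (\<forall>x y. E x y \<and> (x \<in> T \<or> y \<in> T) \<longrightarrow> (x, y) \<in> S)
      \<and> (\<forall>(x, y)\<in>S. x \<in> patch H T \<and> y \<in> patch H T))"

definition poincare_assm :: "(real^'n) set \<Rightarrow> (real^'n \<Rightarrow> real^'n \<Rightarrow> bool) \<Rightarrow> real set \<Rightarrow> real \<Rightarrow> bool" where
  "poincare_assm Nd E Hs \<mu> \<longleftrightarrow> \<mu> > 0 \<and> (\<forall>H\<in>Hs. \<forall>T\<in>mesh H. \<forall>v \<in> hatV Nd. \<exists>c::real.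
      semi (Mform E Nd T) (\<lambda>x. v x - c) \<le> \<mu> * H * semi (Lform E Nd (patch H T)) v)"

definition slod_min :: "(real^'n \<Rightarrow> real^'n \<Rightarrow> real) \<Rightarrow> (real^'n \<Rightarrow> real^'n \<Rightarrow> bool) \<Rightarrow> (real^'n) set
    \<Rightarrow> (real^'n) set \<Rightarrow> real \<Rightarrow> nat \<Rightarrow> (real^'n) set \<Rightarrow> (real^'n \<Rightarrow> real) \<Rightarrow> bool" where
  "slod_min \<gamma> E Nd \<Gamma> H l T g \<longleftrightarrow> (let \<omega> = patchn H l T in
     g \<in> P0 Nd H \<omega> \<and> semi (Mform E Nd \<omega>) g = 1 \<and>
     (\<forall>q\<in>P0 Nd H \<omega>. semi (Mform E Nd \<omega>) q \<noteq> 0 \<longrightarrow>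
        (Vnorm E Nd \<omega> (Rop \<gamma> E Nd \<Gamma> \<omega> g))^2 / (semi (Mform E Nd \<omega>) g)^2
          \<le> (Vnorm E Nd \<omega> (Rop \<gamma> E Nd \<Gamma> \<omega> q))^2 / (semi (Mform E Nd \<omega>) q)^2))"

definition sigma :: "(real^'n \<Rightarrow> real^'n \<Rightarrow> real) \<Rightarrow> (real^'n \<Rightarrow> real^'n \<Rightarrow> bool) \<Rightarrow> (real^'n) set
    \<Rightarrow> (real^'n) set \<Rightarrow> real \<Rightarrow> nat \<Rightarrow> ((real^'n) set \<Rightarrow> real^'n \<Rightarrow> real) \<Rightarrow> real" where
  "sigma \<gamma> E Nd \<Gamma> H l g = Max ((\<lambda>T. Vnorm E Nd (patchn H l T)
      (Rop \<gamma> E Nd \<Gamma> (patchn H l T) (g T))) ` mesh H)"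

definition VHl :: "(real^'n \<Rightarrow> real^'n \<Rightarrow> real) \<Rightarrow> (real^'n \<Rightarrow> real^'n \<Rightarrow> bool) \<Rightarrow> (real^'n) set
    \<Rightarrow> (real^'n) set \<Rightarrow> real \<Rightarrow> nat \<Rightarrow> ((real^'n) set \<Rightarrow> real^'n \<Rightarrow> real) \<Rightarrow> (real^'n \<Rightarrow> real) set" where
  "VHl \<gamma> E Nd \<Gamma> H l g = {v. \<exists>c. v = (\<lambda>x. \<Sum>T\<in>mesh H.
      c T * Kinv_loc \<gamma> E Nd \<Gamma> (patchn H l T) (g T) x)}"

definition riesz_assm :: "(real^'n \<Rightarrow> real^'n \<Rightarrow> bool) \<Rightarrow> (real^'n) set \<Rightarrow> real
    \<Rightarrow> real \<Rightarrow> ((real^'n) set \<Rightarrow> real^'n \<Rightarrow> real) \<Rightarrow> bool" where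
  "riesz_assm E Nd H Cr g \<longleftrightarrow> Cr > 0 \<and> (\<forall>c. 
      (1 / Cr) * (\<Sum>T\<in>mesh H. (c T)^2) \<le> (semi (Mform E Nd UNIV) (\<lambda>x. \<Sum>T\<in>mesh H. c T * g T x))^2
    \<and> (semi (Mform E Nd UNIV) (\<lambda>x. \<Sum>T\<in>mesh H. c T * g T x))^2 \<le> Cr * (\<Sum>T\<in>mesh H. (c T)^2))"

end

theory Submission
  imports Defs
begin


lemma lin_solve:
  fixes A :: "'r \<Rightarrow> 'c \<Rightarrow> real"
  assumes "finite R" "finite C" "card R = card C"
   and "\<forall>c. (\<forall>x\<in>R. (\<Sum>y\<in>C. A x y * c y) = 0) \<longrightarrow> (\<forall>y\<in>C. c y = 0)"
  shows "\<exists>c. \<forall>x\<in>R. (\<Sum>y\<in>C. A x y * c y) = b x"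
  using assms
proof (induction "card C" arbitrary: R C A b)
  case 0
  then show ?case by auto
next
  case (Suc n)
  then obtain z where z: "z \<in> C" by (metis card.empty ex_in_conv nat.distinct(1))
  have "\<exists>x\<in>R. A x z \<noteq> 0"
  proof (rule ccontr)
    assume "\<not> ?thesis"
    hence h: "\<forall>x\<in>R. A x z = 0" by auto
    define c where "c = (\<lambda>y. if y = z then (1::real) else 0)"
    have "\<forall>x\<in>R. (\<Sum>y\<in>C. A x y * c y) = 0"
    proof
      fix x assume "x \<in> R"
      have "(\<Sum>y\<in>C. A x y * c y) = (\<Sum>y\<in>C. if y = z then A x y else 0)"
        by (rule sum.cong) (auto simp: c_def)
      also have "\<dots> = A x z" using z Suc.prems(2) by simp
      finally have "(\<Sum>y\<in>C. A x y * c y) = A x z * c z" by (simp add: c_def)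
      then show "(\<Sum>y\<in>C. A x y * c y) = 0" using h \<open>x \<in> R\<close> by simp
    qed
    then have "c z = 0" using Suc.prems(4) z by blast
    then show False by (simp add: c_def)
  qed
  then obtain x where x: "x \<in> R" and axz: "A x z \<noteq> 0" by blast
  define R' where "R' = R - {x}"
  define C' where "C' = C - {z}"
  have fR': "finite R'" "finite C'" using Suc.prems R'_def C'_def by auto
  have cC': "n = card C'" using Suc.hyps(2) z Suc.prems(2) C'_def by simp
  have cR': "card R' = card C'" using Suc.prems x z R'_def C'_def by simp
  define A' where "A' = (\<lambda>u y. A u y - A u z * A x y / A x z)"
  have sumC: "\<And>c. (\<Sum>y\<in>C. A u y * c y) = A u z * c z + (\<Sum>y\<in>C'. A u y * c y)" for u
    using z Suc.prems(2) C'_def by (simp add: sum.remove)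
  have sumA': "(\<Sum>y\<in>C'. A' u y * c y) = (\<Sum>y\<in>C'. A u y * c y) - A u z / A x z * (\<Sum>y\<in>C'. A x y * c y)" for u c
  proof -
    have "(\<Sum>y\<in>C'. A' u y * c y) = (\<Sum>y\<in>C'. A u y * c y - A u z / A x z * (A x y * c y))"
      by (rule sum.cong) (auto simp: A'_def algebra_simps)
    then show ?thesis by (simp add: sum_subtractf sum_distrib_left)
  qed
  have inj': "\<forall>c. (\<forall>u\<in>R'. (\<Sum>y\<in>C'. A' u y * c y) = 0) \<longrightarrow> (\<forall>y\<in>C'. c y = 0)"
  proof (intro allI impI)
    fix c' assume h: "\<forall>u\<in>R'. (\<Sum>y\<in>C'. A' u y * c' y) = 0"
    define c where "c = c'(z := - (\<Sum>y\<in>C'. A x y * c' y) / A x z)"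
    have cc: "(\<Sum>y\<in>C'. A u y * c y) = (\<Sum>y\<in>C'. A u y * c' y)" for u
      by (rule sum.cong) (auto simp: c_def C'_def)
    have "\<forall>u\<in>R. (\<Sum>y\<in>C. A u y * c y) = 0"
    proof
      fix u assume u: "u \<in> R"
      show "(\<Sum>y\<in>C. A u y * c y) = 0"
      proof (cases "u = x")
        case True
        then show ?thesis using axz by (simp add: sumC cc) (simp add: c_def)
      next
        case False
        then have "u \<in> R'" using u R'_def by simp
        then have "(\<Sum>y\<in>C'. A u y * c' y) = A u z / A x z * (\<Sum>y\<in>C'. A x y * c' y)"
          using h sumA'[of u c'] by simp
        then show ?thesis using axz by (simp add: sumC cc) (simp add: c_def)
      qed
    qed
    then have "\<forall>y\<in>C. c y = 0" using Suc.prems(4) by blast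
    then show "\<forall>y\<in>C'. c' y = 0"
    proof (intro ballI)
      fix y assume "\<forall>y\<in>C. c y = 0" "y \<in> C'"
      then have "c y = 0" "y \<noteq> z" using C'_def by auto
      then show "c' y = 0" by (simp add: c_def)
    qed
  qed
  obtain c' where c': "\<forall>u\<in>R'. (\<Sum>y\<in>C'. A' u y * c' y) = b u - A u z * b x / A x z"
    using Suc.hyps(1)[OF cC' fR' cR' inj', of "\<lambda>u. b u - A u z * b x / A x z"] by blast
  define c where "c = c'(z := (b x - (\<Sum>y\<in>C'. A x y * c' y)) / A x z)"
  have cc: "(\<Sum>y\<in>C'. A u y * c y) = (\<Sum>y\<in>C'. A u y * c' y)" for u
    by (rule sum.cong) (auto simp: c_def C'_def)
  have "\<forall>u\<in>R. (\<Sum>y\<in>C. A u y * c y) = b u"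
  proof
    fix u assume u: "u \<in> R"
    show "(\<Sum>y\<in>C. A u y * c y) = b u"
    proof (cases "u = x")
      case True
      then show ?thesis using axz by (simp add: sumC cc) (simp add: c_def)
    next
      case False
      then have "u \<in> R'" using u R'_def by simp
      then have "(\<Sum>y\<in>C'. A u y * c' y) = b u - A u z * b x / A x z + A u z / A x z * (\<Sum>y\<in>C'. A x y * c' y)"
        using c' sumA'[of u c'] by simp
      then show ?thesis using axz by (simp add: sumC cc) (simp add: c_def field_simps)
    qed
  qed
  then show ?case by blast
qed


definition gf :: "('a \<Rightarrow> 'a \<Rightarrow> real) \<Rightarrow> ('a \<Rightarrow> 'a \<Rightarrow> real) \<Rightarrow> ('a \<Rightarrow> 'a \<Rightarrow> bool) \<Rightarrow> 'a set \<Rightarrow> 'a set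
   \<Rightarrow> ('a \<Rightarrow> real) \<Rightarrow> ('a \<Rightarrow> real) \<Rightarrow> real" where
  "gf a b E Nd \<omega> v w = (\<Sum>x\<in>Nd \<inter> \<omega>. (1/2) * (\<Sum>y\<in>{y. E x y}.
       a x y * v x * w x + b x y * (v x - v y) * (w x - w y)))"

lemma Mform_gf: "Mform E Nd \<omega> = gf (\<lambda>x y. dist x y) (\<lambda>_ _. 0) E Nd \<omega>"
  by (auto simp: fun_eq_iff Mform_def gf_def)

lemma Lform_gf: "Lform E Nd \<omega> = gf (\<lambda>_ _. 0) (\<lambda>x y. 1 / dist x y) E Nd \<omega>"
  by (auto simp: fun_eq_iff Lform_def gf_def)

lemma Kform_gf: "Kform \<gamma> E Nd \<omega> = gf (\<lambda>_ _. 0) (\<lambda>x y. \<gamma> x y / dist x y) E Nd \<omega>"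
  by (auto simp: fun_eq_iff Kform_def gf_def)

lemma MLsum_gf: "Mform E Nd \<omega> v w + Lform E Nd \<omega> v w = gf (\<lambda>x y. dist x y) (\<lambda>x y. 1 / dist x y) E Nd \<omega> v w"
  by (simp add: Mform_def Lform_def gf_def sum.distrib add_divide_distrib)

lemma gf_sym: "gf a b E Nd \<omega> v w = gf a b E Nd \<omega> w v"
  unfolding gf_def by (intro sum.cong refl arg_cong[where f="\<lambda>t. (1/2) * t"]) (simp add: algebra_simps)

lemma gf_lin2: "gf a b E Nd \<omega> v (\<lambda>x. p * w1 x + q * w2 x) = p * gf a b E Nd \<omega> v w1 + q * gf a b E Nd \<omega> v w2"
proof -
  have "gf a b E Nd \<omega> v (\<lambda>x. p * w1 x + q * w2 x) = (\<Sum>x\<in>Nd \<inter> \<omega>. p * ((1/2) * (\<Sum>y\<in>{y. E x y}.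
       a x y * v x * w1 x + b x y * (v x - v y) * (w1 x - w1 y))) + q * ((1/2) * (\<Sum>y\<in>{y. E x y}.
       a x y * v x * w2 x + b x y * (v x - v y) * (w2 x - w2 y))))"
    unfolding gf_def
    by (intro sum.cong refl) (simp add: sum_distrib_left sum.distrib[symmetric] algebra_simps)
  then show ?thesis by (simp add: gf_def sum.distrib sum_distrib_left)
qed

lemma gf_add2: "gf a b E Nd \<omega> v (\<lambda>x. w1 x + w2 x) = gf a b E Nd \<omega> v w1 + gf a b E Nd \<omega> v w2"
  using gf_lin2[of a b E Nd \<omega> v 1 w1 1 w2] by simp

lemma gf_scale2: "gf a b E Nd \<omega> v (\<lambda>x. p * w x) = p * gf a b E Nd \<omega> v w"
  using gf_lin2[of a b E Nd \<omega> v p w 0 w] by simp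

lemma gf_diff2: "gf a b E Nd \<omega> v (\<lambda>x. w1 x - w2 x) = gf a b E Nd \<omega> v w1 - gf a b E Nd \<omega> v w2"
  using gf_lin2[of a b E Nd \<omega> v 1 w1 "-1" w2] by simp

lemma gf_zero2: "gf a b E Nd \<omega> v (\<lambda>x. 0) = 0"
  using gf_scale2[of a b E Nd \<omega> v 0 "\<lambda>x. 0"] by simp

lemma gf_sum2: "gf a b E Nd \<omega> v (\<lambda>x. \<Sum>z\<in>Z. c z * h z x) = (\<Sum>z\<in>Z. c z * gf a b E Nd \<omega> v (h z))"
proof (cases "finite Z")
  case True
  then show ?thesis
  proof (induction Z rule: finite_induct)
    case empty
    then show ?case by (simp add: gf_zero2)
  next
    case (insert z Z)
    then show ?case by (simp add: gf_add2 gf_scale2)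
  qed
qed (simp add: gf_zero2)

lemma gf_diff1: "gf a b E Nd \<omega> (\<lambda>x. w1 x - w2 x) v = gf a b E Nd \<omega> w1 v - gf a b E Nd \<omega> w2 v"
  by (metis gf_sym gf_diff2)
lemma gf_add1: "gf a b E Nd \<omega> (\<lambda>x. w1 x + w2 x) v = gf a b E Nd \<omega> w1 v + gf a b E Nd \<omega> w2 v"
  by (metis gf_sym gf_add2)
lemma gf_scale1: "gf a b E Nd \<omega> (\<lambda>x. p * w x) v = p * gf a b E Nd \<omega> w v"
  by (metis gf_sym gf_scale2)
lemma gf_sum1: "gf a b E Nd \<omega> (\<lambda>x. \<Sum>z\<in>Z. c z * h z x) v = (\<Sum>z\<in>Z. c z * gf a b E Nd \<omega> (h z) v)"
  by (subst gf_sym, subst gf_sum2) (simp add: gf_sym)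

lemma term_nonneg:
  fixes a b v w :: real
  shows "0 \<le> a \<Longrightarrow> 0 \<le> b \<Longrightarrow> 0 \<le> a * v * v + b * (v - w) * (v - w)"
  by (metis add_nonneg_nonneg mult.assoc mult_nonneg_nonneg zero_le_square)

lemma gf_nonneg:
  assumes "\<forall>x y. E x y \<longrightarrow> 0 \<le> a x y \<and> 0 \<le> b x y"
  shows "0 \<le> gf a b E Nd \<omega> v v"
  unfolding gf_def using assms
  by (intro sum_nonneg mult_nonneg_nonneg) (auto intro!: sum_nonneg term_nonneg)

lemma quad_disc:
  fixes A B C :: real
  assumes "\<forall>t. 0 \<le> A + 2 * t * B + t^2 * C" "0 \<le> C"
  shows "B^2 \<le> A * C"
proof (cases "C = 0")
  case True
  have "B = 0"
  proof (rule ccontr)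
    assume "B \<noteq> 0"
    have "0 \<le> A + 2 * (- (A + 1) / (2 * B)) * B + (- (A + 1) / (2 * B))^2 * C"
      using assms(1) by blast
    then show False using True \<open>B \<noteq> 0\<close> by (simp add: field_simps)
  qed
  then show ?thesis using True by simp
next
  case False
  then have C: "C > 0" using assms(2) by simp
  have "0 \<le> A + 2 * (- B / C) * B + (- B / C)^2 * C" using assms(1) by blast
  also have "\<dots> = A - B^2 / C" using C by (simp add: field_simps power2_eq_square)
  finally show ?thesis using C by (simp add: field_simps)
qed

lemma gf_CS:
  assumes "\<forall>x y. E x y \<longrightarrow> 0 \<le> a x y \<and> 0 \<le> b x y"
  shows "(gf a b E Nd \<omega> v w)^2 \<le> gf a b E Nd \<omega> v v * gf a b E Nd \<omega> w w"
proof -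
  let ?G = "gf a b E Nd \<omega>"
  have "\<forall>t. 0 \<le> ?G v v + 2 * t * ?G v w + t^2 * ?G w w"
  proof
    fix t
    have "0 \<le> ?G (\<lambda>x. v x + t * w x) (\<lambda>x. v x + t * w x)" using gf_nonneg[OF assms] .
    also have "\<dots> = ?G v v + 2 * t * ?G v w + t^2 * ?G w w"
      by (simp add: gf_add1 gf_add2 gf_scale1 gf_scale2 gf_sym[of a b E Nd \<omega> w v] power2_eq_square algebra_simps)
    finally show "0 \<le> ?G v v + 2 * t * ?G v w + t^2 * ?G w w" .
  qed
  then show ?thesis using quad_disc gf_nonneg[OF assms] by blast
qed

lemma gf_CS_abs:
  assumes "\<forall>x y. E x y \<longrightarrow> 0 \<le> a x y \<and> 0 \<le> b x y"
  shows "\<bar>gf a b E Nd \<omega> v w\<bar> \<le> sqrt (gf a b E Nd \<omega> v v) * sqrt (gf a b E Nd \<omega> w w)"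
  using gf_CS[OF assms, of Nd \<omega> v w]
  by (metis real_sqrt_abs real_sqrt_le_mono real_sqrt_mult)

lemma gf_cong:
  assumes "\<forall>x\<in>Nd \<inter> \<omega>. v x = v' x \<and> w x = w' x \<and> (\<forall>y. E x y \<longrightarrow> v y = v' y \<and> w y = w' y)"
  shows "gf a b E Nd \<omega> v w = gf a b E Nd \<omega> v' w'"
  unfolding gf_def using assms by (intro sum.cong refl arg_cong[where f="\<lambda>t. (1/2) * t"]) auto

lemma gf_zero:
  assumes "\<forall>x y. E x y \<longrightarrow> 0 \<le> a x y \<and> 0 \<le> b x y" "finite Nd" "\<forall>x y. E x y \<longrightarrow> y \<in> Nd"
    "gf a b E Nd \<omega> v v = 0" "x \<in> Nd \<inter> \<omega>" "E x y"
  shows "a x y * v x * v x = 0 \<and> b x y * (v x - v y) * (v x - v y) = 0"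
proof -
  have fin: "finite {y. E x y}" using assms(2,3) by (metis finite_subset mem_Collect_eq subsetI)
  have tn: "\<And>x y. E x y \<Longrightarrow> 0 \<le> a x y * v x * v x \<and> 0 \<le> b x y * (v x - v y) * (v x - v y)"
    using assms(1) by (metis mult.assoc mult_nonneg_nonneg zero_le_square)
  have tn2: "\<And>x y. E x y \<Longrightarrow> 0 \<le> a x y * v x * v x + b x y * (v x - v y) * (v x - v y)"
    using tn by (meson add_nonneg_nonneg)
  define F where "F x = (1/2) * (\<Sum>y\<in>{y. E x y}. a x y * v x * v x + b x y * (v x - v y) * (v x - v y))" for x
  have Fn: "\<forall>x\<in>Nd \<inter> \<omega>. 0 \<le> F x" unfolding F_def by (auto intro!: sum_nonneg tn2)
  have "sum F (Nd \<inter> \<omega>) = 0" using assms(4) by (simp add: gf_def F_def)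
  then have "F x = 0" using sum_nonneg_eq_0_iff[of "Nd \<inter> \<omega>" F] Fn assms(2,5) by auto
  then have "(\<Sum>y\<in>{y. E x y}. a x y * v x * v x + b x y * (v x - v y) * (v x - v y)) = 0"
    by (simp add: F_def)
  then have "a x y * v x * v x + b x y * (v x - v y) * (v x - v y) = 0"
    using sum_nonneg_eq_0_iff[OF fin, of "\<lambda>y. a x y * v x * v x + b x y * (v x - v y) * (v x - v y)"]
      assms(6) tn2 by auto
  then show ?thesis using tn[OF assms(6)] by linarith
qed

lemma gf_partition:
  assumes "finite Ts" "finite Nd" "\<forall>T\<in>Ts. \<forall>T'\<in>Ts. T \<noteq> T' \<longrightarrow> T \<inter> T' = {}" "Nd \<subseteq> \<Union>Ts"
  shows "gf a b E Nd UNIV v w = (\<Sum>T\<in>Ts. gf a b E Nd T v w)"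
proof -
  have "(\<Sum>T\<in>Ts. gf a b E Nd T v w) = (\<Sum>T\<in>Ts. \<Sum>x\<in>Nd \<inter> T. (1/2) * (\<Sum>y\<in>{y. E x y}.
       a x y * v x * w x + b x y * (v x - v y) * (w x - w y)))" by (simp add: gf_def)
  also have "\<dots> = (\<Sum>x\<in>(\<Union>T\<in>Ts. Nd \<inter> T). (1/2) * (\<Sum>y\<in>{y. E x y}.
       a x y * v x * w x + b x y * (v x - v y) * (w x - w y)))"
    using assms by (subst sum.UNION_disjoint) (auto simp: disjoint_iff)
  also have "(\<Union>T\<in>Ts. Nd \<inter> T) = Nd \<inter> UNIV" using assms(4) by auto
  finally show ?thesis by (simp add: gf_def)
qed

lemma gf_count:
  assumes "\<forall>x y. E x y \<longrightarrow> 0 \<le> a x y \<and> 0 \<le> b x y" "finite Ts" "finite Nd"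
    "\<forall>x\<in>Nd. card {T\<in>Ts. x \<in> \<omega> T} \<le> N"
  shows "(\<Sum>T\<in>Ts. gf a b E Nd (\<omega> T) v v) \<le> real N * gf a b E Nd UNIV v v"
proof -
  define t where "t x = (1/2) * (\<Sum>y\<in>{y. E x y}. a x y * v x * v x + b x y * (v x - v y) * (v x - v y))" for x
  have tn: "0 \<le> t x" for x unfolding t_def using assms(1)
    by (intro mult_nonneg_nonneg sum_nonneg) (auto intro!: term_nonneg)
  have "(\<Sum>T\<in>Ts. gf a b E Nd (\<omega> T) v v) = (\<Sum>T\<in>Ts. \<Sum>x\<in>Nd. if x \<in> \<omega> T then t x else 0)"
  proof (intro sum.cong refl)
    fix T
    have "Nd \<inter> \<omega> T = {x\<in>Nd. x \<in> \<omega> T}" by auto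
    then show "gf a b E Nd (\<omega> T) v v = (\<Sum>x\<in>Nd. if x \<in> \<omega> T then t x else 0)"
    proof -
      have "gf a b E Nd (\<omega> T) v v = (\<Sum>x\<in>Nd \<inter> \<omega> T. t x)" by (simp add: gf_def t_def)
      then show ?thesis using assms(3) \<open>Nd \<inter> \<omega> T = {x\<in>Nd. x \<in> \<omega> T}\<close> by (simp add: sum.inter_filter)
    qed
  qed
  also have "\<dots> = (\<Sum>x\<in>Nd. \<Sum>T\<in>Ts. if x \<in> \<omega> T then t x else 0)" by (rule sum.swap)
  also have "\<dots> = (\<Sum>x\<in>Nd. real (card {T\<in>Ts. x \<in> \<omega> T}) * t x)"
    using assms(2) by (intro sum.cong refl) (simp add: sum.If_cases Int_def)
  also have "\<dots> \<le> (\<Sum>x\<in>Nd. real N * t x)"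
    using assms(4) tn by (intro sum_mono mult_right_mono) auto
  also have "\<dots> = real N * gf a b E Nd UNIV v v" by (simp add: gf_def t_def sum_distrib_left)
  finally show ?thesis .
qed


definition dlt :: "'a \<Rightarrow> 'a \<Rightarrow> real" where "dlt z = (\<lambda>x. if x = z then 1 else 0)"

lemma expand_supp:
  assumes "finite S" "\<forall>x. x \<notin> S \<longrightarrow> v x = 0"
  shows "v = (\<lambda>x. \<Sum>z\<in>S. v z * dlt z x)"
proof
  fix x
  have "(\<Sum>z\<in>S. v z * dlt z x) = (\<Sum>z\<in>S. if x = z then v z else 0)"
    by (rule sum.cong) (auto simp: dlt_def)
  also have "\<dots> = (if x \<in> S then v x else 0)" using assms(1) by (simp add: sum.delta)
  finally show "v x = (\<Sum>z\<in>S. v z * dlt z x)" using assms(2) by auto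
qed

lemma form_solve:
  fixes B :: "('a\<Rightarrow>real) \<Rightarrow> ('a\<Rightarrow>real) \<Rightarrow> real" and F :: "('a\<Rightarrow>real) \<Rightarrow> real"
  assumes fin: "finite S"
  and Blin: "\<And>u (c::'a\<Rightarrow>real) (h::'a\<Rightarrow>'a\<Rightarrow>real) (Z::'a set). B u (\<lambda>x. \<Sum>z\<in>Z. c z * h z x) = (\<Sum>z\<in>Z. c z * B u (h z))"
  and Bsym: "\<And>u v. B u v = B v u"
  and Bdiff: "\<And>v u1 u2. B v (\<lambda>x. u1 x - u2 x) = B v u1 - B v u2"
  and Flin: "\<And>(c::'a\<Rightarrow>real) (h::'a\<Rightarrow>'a\<Rightarrow>real) (Z::'a set). F (\<lambda>x. \<Sum>z\<in>Z. c z * h z x) = (\<Sum>z\<in>Z. c z * F (h z))"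
  and pos: "\<And>v. \<forall>x. x \<notin> S \<longrightarrow> v x = 0 \<Longrightarrow> B v v = 0 \<Longrightarrow> \<forall>x. v x = 0"
  shows "\<exists>!u. (\<forall>x. x \<notin> S \<longrightarrow> u x = 0) \<and> (\<forall>v. (\<forall>x. x \<notin> S \<longrightarrow> v x = 0) \<longrightarrow> B u v = F v)"
proof -
  define A where "A x y = B (dlt x) (dlt y)" for x y
  have inj: "\<forall>c. (\<forall>x\<in>S. (\<Sum>y\<in>S. A x y * c y) = 0) \<longrightarrow> (\<forall>y\<in>S. c y = 0)"
  proof (intro allI impI)
    fix c assume h: "\<forall>x\<in>S. (\<Sum>y\<in>S. A x y * c y) = 0"
    define w where "w = (\<lambda>t. \<Sum>y\<in>S. c y * dlt y t)"
    have ws: "\<forall>x. x \<notin> S \<longrightarrow> w x = 0" unfolding w_def dlt_def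
      by (auto intro!: sum.neutral)
    have wy: "w y = c y" if "y \<in> S" for y
    proof -
      have "w y = (\<Sum>z\<in>S. if y = z then c z else 0)" unfolding w_def
        by (rule sum.cong) (auto simp: dlt_def)
      then show ?thesis using fin that by (simp add: sum.delta)
    qed
    have Bx: "B (dlt x) w = 0" if "x \<in> S" for x
    proof -
      have "B (dlt x) w = (\<Sum>y\<in>S. c y * A x y)" unfolding w_def A_def by (rule Blin[of "dlt x" c dlt S])
      also have "\<dots> = 0" using h that by (simp add: mult.commute)
      finally show ?thesis .
    qed
    have "B w w = B w (\<lambda>x. \<Sum>z\<in>S. w z * dlt z x)" using arg_cong[where f="B w", OF expand_supp[OF fin ws]] .
    also have "\<dots> = (\<Sum>z\<in>S. w z * B w (dlt z))" by (rule Blin)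
    also have "\<dots> = 0" using Bx Bsym[of w] by (simp add: sum.neutral)
    finally have "\<forall>x. w x = 0" using pos ws by blast
    then show "\<forall>y\<in>S. c y = 0" using wy by auto
  qed
  obtain c where c: "\<forall>x\<in>S. (\<Sum>y\<in>S. A x y * c y) = F (dlt x)"
    using lin_solve[OF fin fin refl inj, of "\<lambda>x. F (dlt x)"] by blast
  define u where "u = (\<lambda>t. \<Sum>y\<in>S. c y * dlt y t)"
  have us: "\<forall>x. x \<notin> S \<longrightarrow> u x = 0" unfolding u_def dlt_def
    by (auto intro!: sum.neutral)
  have Bux: "B u (dlt x) = F (dlt x)" if "x \<in> S" for x
  proof -
    have "B u (dlt x) = B (dlt x) u" by (rule Bsym)
    also have "\<dots> = (\<Sum>y\<in>S. c y * A x y)" unfolding u_def A_def by (rule Blin[of "dlt x" c dlt S])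
    also have "\<dots> = F (dlt x)" using c that by (simp add: mult.commute)
    finally show ?thesis .
  qed
  have sol: "\<forall>v. (\<forall>x. x \<notin> S \<longrightarrow> v x = 0) \<longrightarrow> B u v = F v"
  proof (intro allI impI)
    fix v :: "'a \<Rightarrow> real" assume vs: "\<forall>x. x \<notin> S \<longrightarrow> v x = 0"
    have "B u v = B u (\<lambda>x. \<Sum>z\<in>S. v z * dlt z x)" using arg_cong[where f="B u", OF expand_supp[OF fin vs]] .
    also have "\<dots> = (\<Sum>z\<in>S. v z * B u (dlt z))" by (rule Blin)
    also have "\<dots> = (\<Sum>z\<in>S. v z * F (dlt z))" using Bux by simp
    also have "\<dots> = F (\<lambda>x. \<Sum>z\<in>S. v z * dlt z x)" by (rule Flin[symmetric])
    also have "\<dots> = F v" using arg_cong[where f="F", OF expand_supp[OF fin vs]] by simp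
    finally show "B u v = F v" .
  qed
  show ?thesis
  proof (rule ex1I[of _ u])
    show "(\<forall>x. x \<notin> S \<longrightarrow> u x = 0) \<and> (\<forall>v. (\<forall>x. x \<notin> S \<longrightarrow> v x = 0) \<longrightarrow> B u v = F v)"
      using us sol by blast
  next
    fix u' assume h: "(\<forall>x. x \<notin> S \<longrightarrow> u' x = 0) \<and> (\<forall>v. (\<forall>x. x \<notin> S \<longrightarrow> v x = 0) \<longrightarrow> B u' v = F v)"
    define d where "d = (\<lambda>x. u' x - u x)"
    have ds: "\<forall>x. x \<notin> S \<longrightarrow> d x = 0" using h us by (simp add: d_def)
    have "B d d = B d u' - B d u" unfolding d_def by (rule Bdiff)
    also have "\<dots> = B u' d - B u d" using Bsym[of d u'] Bsym[of d u] by simp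
    also have "\<dots> = 0" using h sol ds by simp
    finally have "\<forall>x. d x = 0" using pos ds by blast
    then show "u' = u" by (auto simp: d_def)
  qed
qed


definition extN :: "('a \<Rightarrow> 'a \<Rightarrow> bool) \<Rightarrow> 'a set \<Rightarrow> 'a set \<Rightarrow> 'a set" where
  "extN E Nd \<omega> = {x. x \<in> \<omega> \<or> (\<exists>y\<in>Nd \<inter> \<omega>. E x y)}"

lemma Vsp_eq: "Vsp Nd \<Gamma> = {v. \<forall>x. x \<notin> Nd - \<Gamma> \<longrightarrow> v x = 0}"
  by (auto simp: Vsp_def hatV_def)

lemma Vloc_eq: "Vloc Nd \<Gamma> \<omega> = {v. \<forall>x. x \<notin> (Nd - \<Gamma>) \<inter> \<omega> \<longrightarrow> v x = 0}"
  by (auto simp: Vloc_def Vsp_def hatV_def)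

lemma Vtilde_eq: "Vtilde E Nd \<Gamma> \<omega> = {v. \<forall>x. x \<notin> (Nd - \<Gamma>) \<inter> extN E Nd \<omega> \<longrightarrow> v x = 0}"
  by (auto simp: Vtilde_def Vsp_def hatV_def extN_def)

locale netw =
  fixes Nd :: "(real^'n) set" and E :: "real^'n \<Rightarrow> real^'n \<Rightarrow> bool" and \<Gamma> :: "(real^'n) set"
    and \<gamma> :: "real^'n \<Rightarrow> real^'n \<Rightarrow> real" and \<alpha> \<beta> :: real
  assumes net: "network Nd E" and gam: "Nd \<inter> \<Gamma> \<noteq> {}"
    and gb: "\<forall>x y. E x y \<longrightarrow> \<gamma> x y = \<gamma> y x \<and> \<alpha> \<le> \<gamma> x y \<and> \<gamma> x y \<le> \<beta>"
    and apos: "0 < \<alpha>"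
begin

lemma finNd: "finite Nd" using net by (simp add: network_def)
lemma Ein: "E x y \<Longrightarrow> x \<in> Nd \<and> y \<in> Nd \<and> x \<noteq> y \<and> E y x" using net by (simp add: network_def)
lemma dpos: "E x y \<Longrightarrow> dist x y > 0" using Ein by simp
lemma conn: "x \<in> Nd \<Longrightarrow> y \<in> Nd \<Longrightarrow> E\<^sup>*\<^sup>* x y" using net by (simp add: network_def)
lemma EinNd: "\<forall>x y. E x y \<longrightarrow> y \<in> Nd" using Ein by blast
lemma gpos: "E x y \<Longrightarrow> \<gamma> x y > 0" using gb apos by force

lemma nbr: assumes "x \<in> Nd" shows "\<exists>y. E x y"
proof -
  have "card Nd \<ge> 2" using net by (simp add: network_def)
  have "\<not> Nd \<subseteq> {x}"
  proof
    assume "Nd \<subseteq> {x}"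
    then have "card Nd \<le> card {x}" by (rule card_mono[rotated]) simp
    then show False using \<open>card Nd \<ge> 2\<close> by simp
  qed
  then obtain y where "y \<in> Nd" "y \<noteq> x" by blast
  then have "E\<^sup>*\<^sup>* x y" using conn assms by blast
  then show ?thesis using \<open>y \<noteq> x\<close> by (metis converse_rtranclpE)
qed

lemma nnM: "\<forall>x y. E x y \<longrightarrow> 0 \<le> dist x y \<and> 0 \<le> (0::real)" by simp
lemma nnL: "\<forall>x y. E x y \<longrightarrow> 0 \<le> (0::real) \<and> 0 \<le> 1 / dist x y" by simp
lemma nnK: "\<forall>x y. E x y \<longrightarrow> 0 \<le> (0::real) \<and> 0 \<le> \<gamma> x y / dist x y"
  using gpos by (simp add: less_imp_le)
lemma nnV: "\<forall>x y. E x y \<longrightarrow> 0 \<le> dist x y \<and> 0 \<le> 1 / dist x y" by simp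

lemma K_pos:
  assumes "\<forall>x. x \<notin> (Nd - \<Gamma>) \<inter> \<omega> \<longrightarrow> v x = 0" "Kform \<gamma> E Nd \<omega> v v = 0"
  shows "\<forall>x. v x = 0"
proof (rule ccontr)
  assume "\<not> ?thesis"
  then obtain x0 where x0: "v x0 \<noteq> 0" by blast
  then have x0N: "x0 \<in> Nd" using assms(1) by blast
  have eq: "v x = v y" if "x \<in> Nd \<inter> \<omega>" "E x y" for x y
  proof -
    have h0: "\<gamma> x y / dist x y * (v x - v y) * (v x - v y) = 0"
      using gf_zero[OF nnK finNd EinNd, of \<omega> v x y] assms(2) that unfolding Kform_gf by blast
    have "\<gamma> x y / dist x y > 0" using gpos dpos that by simp
    then have "(v x - v y) * (v x - v y) = 0" using h0 by (metis mult.assoc mult_eq_0_iff less_irrefl)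
    then show ?thesis by simp
  qed
  obtain z where z: "z \<in> Nd" "z \<in> \<Gamma>" using gam by blast
  have "E\<^sup>*\<^sup>* x0 z" using conn x0N z by blast
  then have "v z = v x0"
  proof (induction rule: rtranclp_induct)
    case base
    then show ?case by simp
  next
    case (step y y')
    then have "y \<in> Nd \<inter> \<omega>" using assms(1) x0 by (metis Diff_iff IntD1 IntD2 IntI)
    then show ?case using eq step by metis
  qed
  then show False using z x0 assms(1) by auto
qed

lemma LM_pos:
  assumes "\<forall>x. x \<notin> (Nd - \<Gamma>) \<inter> extN E Nd \<omega> \<longrightarrow> v x = 0"
    "gf (\<lambda>x y. dist x y) (\<lambda>x y. 1 / dist x y) E Nd \<omega> v v = 0"
  shows "\<forall>x. v x = 0"
proof -
  have z1: "v x = 0 \<and> v y = v x" if "x \<in> Nd \<inter> \<omega>" "E x y" for x y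
  proof -
    have h: "dist x y * v x * v x = 0 \<and> 1 / dist x y * (v x - v y) * (v x - v y) = 0"
      using gf_zero[OF nnV finNd EinNd, of \<omega> v x y] assms(2) that by simp
    have "dist x y > 0" using dpos that by simp
    then show ?thesis using h by simp
  qed
  show ?thesis
  proof
    fix x
    show "v x = 0"
    proof (rule ccontr)
      assume nz: "v x \<noteq> 0"
      then have xN: "x \<in> Nd" and xe: "x \<in> extN E Nd \<omega>" using assms(1) by auto
      show False
      proof (cases "x \<in> \<omega>")
        case True
        obtain y where "E x y" using nbr xN by blast
        then show False using z1[of x y] True xN nz by simp
      next
        case False
        then obtain y where "y \<in> Nd \<inter> \<omega>" "E x y" using xe by (auto simp: extN_def)
        then have "E y x" using Ein by blast
        then show False using z1[of y x] \<open>y \<in> Nd \<inter> \<omega>\<close> nz by simp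
      qed
    qed
  qed
qed

lemma Kinv_prop:
  "Kinv \<gamma> E Nd \<Gamma> f \<in> Vsp Nd \<Gamma> \<and>
   (\<forall>v\<in>Vsp Nd \<Gamma>. Kform \<gamma> E Nd UNIV (Kinv \<gamma> E Nd \<Gamma> f) v = Mform E Nd UNIV f v)"
proof -
  have ex: "\<exists>!u. (\<forall>x. x \<notin> Nd - \<Gamma> \<longrightarrow> u x = 0) \<and>
     (\<forall>v. (\<forall>x. x \<notin> Nd - \<Gamma> \<longrightarrow> v x = 0) \<longrightarrow> Kform \<gamma> E Nd UNIV u v = Mform E Nd UNIV f v)"
  proof (rule form_solve)
    show "finite (Nd - \<Gamma>)" using finNd by simp
    show "Kform \<gamma> E Nd UNIV u (\<lambda>x. \<Sum>z\<in>Z. c z * h z x) = (\<Sum>z\<in>Z. c z * Kform \<gamma> E Nd UNIV u (h z))" for u c h Z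
      by (simp add: Kform_gf gf_sum2)
    show "Kform \<gamma> E Nd UNIV u v = Kform \<gamma> E Nd UNIV v u" for u v unfolding Kform_gf by (rule gf_sym)
    show "Kform \<gamma> E Nd UNIV v (\<lambda>x. u1 x - u2 x) = Kform \<gamma> E Nd UNIV v u1 - Kform \<gamma> E Nd UNIV v u2" for v u1 u2
      unfolding Kform_gf by (rule gf_diff2)
    show "Mform E Nd UNIV f (\<lambda>x. \<Sum>z\<in>Z. c z * h z x) = (\<Sum>z\<in>Z. c z * Mform E Nd UNIV f (h z))" for c h Z
      by (simp add: Mform_gf gf_sum2)
    show "\<forall>x. v x = 0" if "\<forall>x. x \<notin> Nd - \<Gamma> \<longrightarrow> v x = 0" "Kform \<gamma> E Nd UNIV v v = 0" for v
      using K_pos[of UNIV v] that by simp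
  qed
  have "\<exists>!u. u \<in> Vsp Nd \<Gamma> \<and> (\<forall>v\<in>Vsp Nd \<Gamma>. Kform \<gamma> E Nd UNIV u v = Mform E Nd UNIV f v)"
    using ex by (simp add: Vsp_eq)
  then show ?thesis unfolding Kinv_def by (rule theI')
qed

lemma Kinv_loc_prop:
  "Kinv_loc \<gamma> E Nd \<Gamma> \<omega> g \<in> Vloc Nd \<Gamma> \<omega> \<and>
   (\<forall>v\<in>Vloc Nd \<Gamma> \<omega>. Kform \<gamma> E Nd \<omega> (Kinv_loc \<gamma> E Nd \<Gamma> \<omega> g) v = Mform E Nd \<omega> g v)"
proof -
  have ex: "\<exists>!u. (\<forall>x. x \<notin> (Nd - \<Gamma>) \<inter> \<omega> \<longrightarrow> u x = 0) \<and>
     (\<forall>v. (\<forall>x. x \<notin> (Nd - \<Gamma>) \<inter> \<omega> \<longrightarrow> v x = 0) \<longrightarrow> Kform \<gamma> E Nd \<omega> u v = Mform E Nd \<omega> g v)"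
  proof (rule form_solve)
    show "finite ((Nd - \<Gamma>) \<inter> \<omega>)" using finNd by simp
    show "Kform \<gamma> E Nd \<omega> u (\<lambda>x. \<Sum>z\<in>Z. c z * h z x) = (\<Sum>z\<in>Z. c z * Kform \<gamma> E Nd \<omega> u (h z))" for u c h Z
      by (simp add: Kform_gf gf_sum2)
    show "Kform \<gamma> E Nd \<omega> u v = Kform \<gamma> E Nd \<omega> v u" for u v unfolding Kform_gf by (rule gf_sym)
    show "Kform \<gamma> E Nd \<omega> v (\<lambda>x. u1 x - u2 x) = Kform \<gamma> E Nd \<omega> v u1 - Kform \<gamma> E Nd \<omega> v u2" for v u1 u2
      unfolding Kform_gf by (rule gf_diff2)
    show "Mform E Nd \<omega> g (\<lambda>x. \<Sum>z\<in>Z. c z * h z x) = (\<Sum>z\<in>Z. c z * Mform E Nd \<omega> g (h z))" for c h Z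
      by (simp add: Mform_gf gf_sum2)
    show "\<forall>x. v x = 0" if "\<forall>x. x \<notin> (Nd - \<Gamma>) \<inter> \<omega> \<longrightarrow> v x = 0" "Kform \<gamma> E Nd \<omega> v v = 0" for v
      using K_pos[of \<omega> v] that by simp
  qed
  have "\<exists>!u. u \<in> Vloc Nd \<Gamma> \<omega> \<and> (\<forall>v\<in>Vloc Nd \<Gamma> \<omega>. Kform \<gamma> E Nd \<omega> u v = Mform E Nd \<omega> g v)"
    using ex by (simp add: Vloc_eq)
  then show ?thesis unfolding Kinv_loc_def by (rule theI')
qed

lemma Rop_prop:
  "Rop \<gamma> E Nd \<Gamma> \<omega> q \<in> Vtilde E Nd \<Gamma> \<omega> \<and>
   (\<forall>v\<in>Vtilde E Nd \<Gamma> \<omega>. gf (\<lambda>x y. dist x y) (\<lambda>x y. 1 / dist x y) E Nd \<omega> (Rop \<gamma> E Nd \<Gamma> \<omega> q) v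
       = Kform \<gamma> E Nd UNIV (Kinv_loc \<gamma> E Nd \<Gamma> \<omega> q) v - Mform E Nd UNIV q v)"
proof -
  let ?B = "gf (\<lambda>x y. dist x y) (\<lambda>x y. 1 / dist x y) E Nd \<omega>"
  let ?F = "\<lambda>v. Kform \<gamma> E Nd UNIV (Kinv_loc \<gamma> E Nd \<Gamma> \<omega> q) v - Mform E Nd UNIV q v"
  have Flin: "?F (\<lambda>x. \<Sum>z\<in>Z. c z * h z x) = (\<Sum>z\<in>Z. c z * ?F (h z))" for c h Z
    by (simp add: Kform_gf Mform_gf gf_sum2 sum_subtractf right_diff_distrib)
  have ex: "\<exists>!u. (\<forall>x. x \<notin> (Nd - \<Gamma>) \<inter> extN E Nd \<omega> \<longrightarrow> u x = 0) \<and>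
     (\<forall>v. (\<forall>x. x \<notin> (Nd - \<Gamma>) \<inter> extN E Nd \<omega> \<longrightarrow> v x = 0) \<longrightarrow> ?B u v = ?F v)"
  proof (rule form_solve)
    show "finite ((Nd - \<Gamma>) \<inter> extN E Nd \<omega>)" using finNd by simp
    show "?B u (\<lambda>x. \<Sum>z\<in>Z. c z * h z x) = (\<Sum>z\<in>Z. c z * ?B u (h z))" for u c h Z
      by (rule gf_sum2)
    show "?B u v = ?B v u" for u v by (rule gf_sym)
    show "?B v (\<lambda>x. u1 x - u2 x) = ?B v u1 - ?B v u2" for v u1 u2 by (rule gf_diff2)
    show "?F (\<lambda>x. \<Sum>z\<in>Z. c z * h z x) = (\<Sum>z\<in>Z. c z * ?F (h z))" for c h Z by (rule Flin)
    show "\<forall>x. v x = 0" if "\<forall>x. x \<notin> (Nd - \<Gamma>) \<inter> extN E Nd \<omega> \<longrightarrow> v x = 0" "?B v v = 0" for v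
      using LM_pos[of \<omega> v] that by simp
  qed
  have eqB: "Lform E Nd \<omega> r v + Mform E Nd \<omega> r v = ?B r v" for r v
    using MLsum_gf[of E Nd \<omega> r v] by simp
  have "\<exists>!u. u \<in> Vtilde E Nd \<Gamma> \<omega> \<and> (\<forall>v\<in>Vtilde E Nd \<Gamma> \<omega>. ?B u v = ?F v)"
    using ex by (simp add: Vtilde_eq)
  then have "\<exists>!u. u \<in> Vtilde E Nd \<Gamma> \<omega> \<and> (\<forall>v\<in>Vtilde E Nd \<Gamma> \<omega>. Lform E Nd \<omega> u v + Mform E Nd \<omega> u v = ?F v)"
    by (simp add: eqB)
  then have "Rop \<gamma> E Nd \<Gamma> \<omega> q \<in> Vtilde E Nd \<Gamma> \<omega> \<and> (\<forall>v\<in>Vtilde E Nd \<Gamma> \<omega>. Lform E Nd \<omega> (Rop \<gamma> E Nd \<Gamma> \<omega> q) v + Mform E Nd \<omega> (Rop \<gamma> E Nd \<Gamma> \<omega> q) v = ?F v)"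
    unfolding Rop_def by (rule theI')
  then show ?thesis by (simp add: eqB)
qed

end


definition valid :: "real \<Rightarrow> ('n \<Rightarrow> nat) \<Rightarrow> bool" where
  "valid H a \<longleftrightarrow> (\<forall>i. real (a i + 1) * H \<le> 1)"

lemma mesh_eq: "mesh H = cube H ` {a. valid H a}"
  by (auto simp: mesh_def valid_def)

lemma funs_finite: "finite {a :: 'n::finite \<Rightarrow> nat. \<forall>i. a i \<in> A i}" if "\<forall>i. finite (A i)"
proof -
  have "{a :: 'n \<Rightarrow> nat. \<forall>i. a i \<in> A i} = PiE UNIV A" by (auto simp: PiE_UNIV_domain Pi_def)
  then show ?thesis using that by (simp add: finite_PiE)
qed

lemma funs_card: "card {a :: 'n::finite \<Rightarrow> nat. \<forall>i. a i \<in> A i} = (\<Prod>i\<in>UNIV. card (A i))"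
proof -
  have "{a :: 'n \<Rightarrow> nat. \<forall>i. a i \<in> A i} = PiE UNIV A" by (auto simp: PiE_UNIV_domain Pi_def)
  then show ?thesis by (simp add: card_PiE)
qed

context
  fixes H :: real and N :: nat
  assumes HN: "H = 1 / real N" and N1: "N \<ge> 1"
begin

lemma Hpos: "H > 0" using HN N1 by simp

lemma valid_iff: "valid H a \<longleftrightarrow> (\<forall>i. a i < N)"
proof -
  have "real (a i + 1) * H \<le> 1 \<longleftrightarrow> a i < N" for i
  proof -
    have "real (a i + 1) * H = real (a i + 1) / real N" using HN by simp
    also have "\<dots> \<le> 1 \<longleftrightarrow> real (a i + 1) \<le> real N" using N1 by (simp add: divide_le_eq_1)
    finally show ?thesis by linarith
  qed
  then show ?thesis by (simp add: valid_def)
qed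

lemma valid_finite: "finite {a :: 'n::finite \<Rightarrow> nat. valid H a}"
proof -
  have "{a :: 'n \<Rightarrow> nat. valid H a} = {a. \<forall>i. a i \<in> {..<N}}" by (auto simp: valid_iff)
  then show ?thesis using funs_finite[of "\<lambda>_. {..<N}"] by simp
qed

lemma mesh_finite: "finite (mesh H :: (real^'n::finite) set set)"
  unfolding mesh_eq by (rule finite_imageI[OF valid_finite])

lemma cube_unique:
  fixes x :: "real^'n::finite" and a b :: "'n \<Rightarrow> nat"
  assumes "x \<in> cube H a" "x \<in> cube H b" "valid H a" "valid H b"
  shows "a = b"
proof
  fix i
  have A: "real (a i) * H \<le> x$i" "x$i < real (a i + 1) * H \<or> (real (a i + 1) * H = 1 \<and> x$i \<le> 1)"
    using assms(1) by (auto simp: cube_def)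
  have B: "real (b i) * H \<le> x$i" "x$i < real (b i + 1) * H \<or> (real (b i + 1) * H = 1 \<and> x$i \<le> 1)"
    using assms(2) by (auto simp: cube_def)
  have va: "real (a i + 1) * H \<le> 1" and vb: "real (b i + 1) * H \<le> 1" using assms(3,4) by (auto simp: valid_def)
  have H0: "H > 0" by (rule Hpos)
  have ab: False if "a i < b i" "real (a i) * H \<le> x$i" "x$i < real (a i + 1) * H \<or> (real (a i + 1) * H = 1 \<and> x$i \<le> 1)"
    "real (b i) * H \<le> x$i" "real (b i + 1) * H \<le> 1" for a b :: "'n \<Rightarrow> nat"
  proof -
    have "real (a i + 1) \<le> real (b i)" using that(1) by simp
    then have le: "real (a i + 1) * H \<le> real (b i) * H" using H0 by (simp add: mult_right_mono)
    then have "real (a i + 1) * H = 1" using that(3,4) by linarith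
    moreover have "real (b i) * H < real (b i + 1) * H" using H0 by simp
    ultimately show False using le that(5) by linarith
  qed
  show "a i = b i"
  proof (rule ccontr)
    assume "a i \<noteq> b i"
    then consider "a i < b i" | "b i < a i" by linarith
    then show False
    proof cases
      case 1 then show ?thesis using ab[of a b] A B vb by blast
    next
      case 2 then show ?thesis using ab[of b a] A B va by blast
    qed
  qed
qed

lemma cover:
  assumes "x \<in> Omega"
  shows "\<exists>a. valid H a \<and> x \<in> cube H a"
proof -
  define a where "a i = min (nat \<lfloor>x$i * real N\<rfloor>) (N - 1)" for i
  have x01: "0 \<le> x$i" "x$i \<le> 1" for i using assms by (auto simp: Omega_def)
  have "valid H a" unfolding valid_iff a_def using N1 by auto
  moreover have "x \<in> cube H a"
    unfolding cube_def
  proof (intro CollectI allI conjI)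
    fix i
    have Nr: "real N \<ge> 1" using N1 by simp
    have fl0: "0 \<le> \<lfloor>x$i * real N\<rfloor>" using x01[of i] by simp
    have "real (a i) \<le> x$i * real N"
    proof -
      have "real (a i) \<le> real (nat \<lfloor>x$i * real N\<rfloor>)" unfolding a_def by simp
      also have "\<dots> = of_int \<lfloor>x$i * real N\<rfloor>" using fl0 by simp
      also have "\<dots> \<le> x$i * real N" by simp
      finally show ?thesis .
    qed
    then have "real (a i) * H \<le> x$i * real N * H" using Hpos by (simp add: mult_right_mono)
    also have "\<dots> = x$i" using HN Nr by simp
    finally show "real (a i) * H \<le> x$i" .
    show "x$i < real (a i + 1) * H \<or> (real (a i + 1) * H = 1 \<and> x$i \<le> 1)"
    proof (cases "nat \<lfloor>x$i * real N\<rfloor> \<le> N - 1")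
      case True
      then have "a i = nat \<lfloor>x$i * real N\<rfloor>" by (simp add: a_def)
      then have "real (a i + 1) = of_int \<lfloor>x$i * real N\<rfloor> + 1" using fl0 by simp
      then have "x$i * real N < real (a i + 1)" by linarith
      then have "x$i * real N * H < real (a i + 1) * H" using Hpos by (simp add: mult_strict_right_mono)
      then have "x$i < real (a i + 1) * H" using HN Nr by simp
      then show ?thesis by blast
    next
      case False
      then have "a i = N - 1" by (simp add: a_def)
      then have "real (a i + 1) = real N" using N1 by simp
      then show ?thesis using HN Nr x01[of i] by simp
    qed
  qed
  ultimately show ?thesis by blast
qed

lemma mesh_disjoint: "\<forall>T\<in>mesh H. \<forall>T'\<in>mesh H. T \<noteq> T' \<longrightarrow> T \<inter> (T' :: (real^'n) set) = {}"
  unfolding mesh_eq using cube_unique by blast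

lemma mesh_cover: "Omega \<subseteq> \<Union>(mesh H :: (real^'n) set set)"
  unfolding mesh_eq using cover by blast

definition box :: "('n \<Rightarrow> nat) \<Rightarrow> (real^'n) set" where
  "box b = {x. \<forall>i. real (b i) * H \<le> x$i \<and> x$i \<le> real (b i + 1) * H}"

lemma closed_box: "closed (box b)"
  unfolding box_def
  by (intro closed_Collect_all closed_Collect_conj closed_Collect_le continuous_intros)

lemma cube_box: "cube H b \<subseteq> box b"
proof
  fix x assume "x \<in> cube H b"
  then have "real (b i) * H \<le> x$i \<and> (x$i < real (b i + 1) * H \<or> (real (b i + 1) * H = 1 \<and> x$i \<le> 1))" for i
    by (simp add: cube_def)
  then have "real (b i) * H \<le> x$i \<and> x$i \<le> real (b i + 1) * H" for i
    by (metis less_eq_real_def)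
  then show "x \<in> box b" by (simp add: box_def)
qed

lemma closure_cube: "closure (cube H b) \<subseteq> box b"
  by (rule closure_minimal[OF cube_box closed_box])

lemma box_adj: "p \<in> box a \<Longrightarrow> p \<in> box b \<Longrightarrow> a i \<le> b i + 1"
proof -
  assume "p \<in> box a" "p \<in> box b"
  then have "real (a i) * H \<le> p$i" "p$i \<le> real (b i + 1) * H" unfolding box_def by auto
  then have "real (a i) * H \<le> real (b i + 1) * H" by linarith
  then have "real (a i) \<le> real (b i + 1)" using Hpos by simp
  then show ?thesis by linarith
qed

definition near :: "nat \<Rightarrow> ('n \<Rightarrow> nat) \<Rightarrow> ('n \<Rightarrow> nat) set" where
  "near l a = {b. valid H b \<and> (\<forall>i. a i \<le> b i + l \<and> b i \<le> a i + l)}"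

lemma near_finite: "finite (near l (a :: 'n::finite \<Rightarrow> nat))"
  using valid_finite by (rule finite_subset[rotated]) (auto simp: near_def)

lemma patchn_sub:
  assumes "valid H a"
  shows "patchn H l (cube H a) \<subseteq> \<Union>(cube H ` near l (a :: 'n::finite \<Rightarrow> nat))"
proof (induction l)
  case 0
  have "a \<in> near 0 a" using assms by (simp add: near_def)
  then show ?case by (auto simp: patchn_def)
next
  case (Suc l)
  let ?\<omega> = "patchn H l (cube H a)"
  have eq: "patchn H (Suc l) (cube H a) = patch H ?\<omega>" by (simp add: patchn_def)
  have U: "closure ?\<omega> \<subseteq> \<Union>(box ` near l a)"
  proof (rule closure_minimal)
    show "?\<omega> \<subseteq> \<Union>(box ` near l a)" using Suc.IH cube_box by blast
    show "closed (\<Union>(box ` near l a))" using near_finite closed_box by blast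
  qed
  show ?case
  proof
    fix x assume "x \<in> patchn H (Suc l) (cube H a)"
    then obtain T where T: "T \<in> mesh H" "closure T \<inter> closure ?\<omega> \<noteq> {}" "x \<in> T"
      unfolding eq patch_def by blast
    then obtain b' where b': "valid H b'" "T = cube H b'" by (auto simp: mesh_eq)
    obtain p where p: "p \<in> closure T" "p \<in> closure ?\<omega>" using T(2) by blast
    then obtain b where b: "b \<in> near l a" "p \<in> box b" using U by blast
    have pb': "p \<in> box b'" using p(1) b'(2) closure_cube by blast
    have bn: "\<forall>i. a i \<le> b i + l \<and> b i \<le> a i + l" using b(1) by (simp add: near_def)
    have "b' \<in> near (Suc l) a"
      unfolding near_def
    proof (intro CollectI conjI allI)
      show "valid H b'" by (rule b'(1))
      fix i
      have "b' i \<le> b i + 1" "b i \<le> b' i + 1" using box_adj[OF pb' b(2)] box_adj[OF b(2) pb'] by auto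
      then show "a i \<le> b' i + Suc l" "b' i \<le> a i + Suc l" using bn[rule_format, of i] by linarith+
    qed
    then show "x \<in> \<Union>(cube H ` near (Suc l) a)" using T(3) b'(2) by blast
  qed
qed

lemma count_patchn:
  assumes "x \<in> Omega"
  shows "card {T \<in> mesh H. x \<in> patchn H l (T :: (real^'n) set)} \<le> (2 * l + 1) ^ CARD('n)"
proof -
  obtain b0 :: "'n \<Rightarrow> nat" where b0: "valid H b0" "x \<in> cube H b0" using cover assms by blast
  have sub: "{T \<in> mesh H. x \<in> patchn H l (T :: (real^'n) set)} \<subseteq> cube H ` {a. \<forall>i. a i \<in> {b0 i - l .. b0 i + l}}"
  proof
    fix T assume "T \<in> {T \<in> mesh H. x \<in> patchn H l (T :: (real^'n) set)}"
    then obtain a where a: "valid H a" "T = cube H a" "x \<in> patchn H l (cube H a)" by (auto simp: mesh_eq)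
    then obtain b where b: "b \<in> near l a" "x \<in> cube H b" using patchn_sub by blast
    then have "b = b0" using cube_unique b0 by (auto simp: near_def)
    then have "\<forall>i. a i \<le> b0 i + l \<and> b0 i \<le> a i + l" using b(1) by (simp add: near_def)
    then have "\<forall>i. a i \<in> {b0 i - l .. b0 i + l}" by (simp add: le_diff_conv)
    then show "T \<in> cube H ` {a. \<forall>i. a i \<in> {b0 i - l .. b0 i + l}}" using a(2) by blast
  qed
  have "card {T \<in> mesh H. x \<in> patchn H l (T :: (real^'n) set)} \<le> card (cube H ` {a :: 'n \<Rightarrow> nat. \<forall>i. a i \<in> {b0 i - l .. b0 i + l}})"
    by (rule card_mono[OF finite_imageI[OF funs_finite] sub]) simp
  also have "\<dots> \<le> card {a :: 'n \<Rightarrow> nat. \<forall>i. a i \<in> {b0 i - l .. b0 i + l}}" by (rule card_image_le) (rule funs_finite, simp)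
  also have "\<dots> = (\<Prod>i\<in>UNIV. card {b0 i - l .. b0 i + l})" by (rule funs_card)
  also have "\<dots> \<le> (\<Prod>i\<in>(UNIV::'n set). 2 * l + 1)" by (intro prod_mono) auto
  also have "\<dots> = (2 * l + 1) ^ CARD('n)" by simp
  finally show ?thesis .
qed

end


lemma semi_sq: "0 \<le> F v v \<Longrightarrow> (semi F v)^2 = F v v"
  by (simp add: semi_def)

lemma Vnorm_gf: "Vnorm E Nd \<omega> v = sqrt (gf (\<lambda>x y. dist x y) (\<lambda>x y. 1 / dist x y) E Nd \<omega> v v)"
  by (simp add: Vnorm_def MLsum_gf)

lemma Mform_cong:
  assumes "\<forall>x\<in>Nd \<inter> \<omega>. v x = v' x \<and> w x = w' x"
  shows "Mform E Nd \<omega> v w = Mform E Nd \<omega> v' w'"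
  unfolding Mform_def using assms by (intro sum.cong refl) auto

lemma Mform_cong2:
  assumes "\<forall>x\<in>Nd \<inter> \<omega>. v x \<noteq> 0 \<longrightarrow> w x = w' x"
  shows "Mform E Nd \<omega> v w = Mform E Nd \<omega> v w'"
  unfolding Mform_def
proof (intro sum.cong refl arg_cong[where f="\<lambda>t. (1/2) * t"])
  fix x y assume "x \<in> Nd \<inter> \<omega>"
  then show "dist x y * v x * w x = dist x y * v x * w' x" using assms by (cases "v x = 0") auto
qed

locale slod = netw Nd E \<Gamma> \<gamma> \<alpha> \<beta>
  for Nd :: "(real^'n) set" and E \<Gamma> \<gamma> \<alpha> \<beta> +
  fixes \<mu> Cfr H :: real and N l :: nat and Cr :: real and g :: "(real^'n) set \<Rightarrow> real^'n \<Rightarrow> real"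
  assumes HN: "H = 1 / real N" and N1: "N \<ge> 1" and l1: "l \<ge> 1" and mupos: "\<mu> > 0" and Cfrpos: "Cfr > 0"
  and pc: "\<forall>T\<in>mesh H. \<forall>v\<in>hatV Nd. \<exists>c. semi (Mform E Nd T) (\<lambda>x. v x - c) \<le> \<mu> * H * semi (Lform E Nd (patch H T)) v"
  and fr: "\<forall>v\<in>Vsp Nd \<Gamma>. semi (Mform E Nd UNIV) v \<le> Cfr * semi (Lform E Nd UNIV) v"
  and smin: "\<forall>T\<in>mesh H. slod_min \<gamma> E Nd \<Gamma> H l T (g T)"
  and riesz: "riesz_assm E Nd H Cr g"
begin

abbreviation "MH \<equiv> (mesh H :: (real^'n) set set)"
abbreviation "om T \<equiv> patchn H l T"
abbreviation "phi T \<equiv> Kinv_loc \<gamma> E Nd \<Gamma> (om T) (g T)"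
abbreviation "RR T \<equiv> Rop \<gamma> E Nd \<Gamma> (om T) (g T)"
abbreviation "GV \<equiv> gf (\<lambda>x y. dist x y) (\<lambda>x y. 1 / dist x y) E Nd"

lemma mfin: "finite MH" using mesh_finite[OF HN N1] .
lemma mdisj: "\<forall>T\<in>MH. \<forall>T'\<in>MH. T \<noteq> T' \<longrightarrow> T \<inter> (T' :: (real^'n) set) = {}"
  using mesh_disjoint[OF HN N1] .
lemma NdOmega: "Nd \<subseteq> Omega" using net by (simp add: network_def)
lemma Ndcover: "Nd \<subseteq> \<Union>MH" using mesh_cover[OF HN N1] NdOmega by blast
lemma Hpos: "H > 0" using HN N1 by simp

lemma Mpart: "Mform E Nd UNIV v w = (\<Sum>T\<in>MH. Mform E Nd T v w)"
  unfolding Mform_gf by (rule gf_partition[OF mfin finNd mdisj Ndcover])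

lemma Mnn: "0 \<le> Mform E Nd \<omega> v v" unfolding Mform_gf by (rule gf_nonneg[OF nnM])
lemma Lnn: "0 \<le> Lform E Nd \<omega> v v" unfolding Lform_gf by (rule gf_nonneg[OF nnL])
lemma Knn: "0 \<le> Kform \<gamma> E Nd \<omega> v v" unfolding Kform_gf by (rule gf_nonneg[OF nnK])
lemma GVnn: "0 \<le> GV \<omega> v v" by (rule gf_nonneg[OF nnV])

lemma g_supp:
  assumes "T \<in> MH" "g T x \<noteq> 0"
  shows "x \<in> Nd \<and> x \<in> om T"
proof -
  have "g T \<in> P0 Nd H (om T)" using smin assms(1) by (simp add: slod_min_def Let_def)
  then obtain c where c: "g T = (\<lambda>x. \<Sum>T'\<in>{T' \<in> MH. T' \<subseteq> om T}. c T' * ind Nd T' x)"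
    by (auto simp: P0_def)
  then have "(\<Sum>T'\<in>{T' \<in> MH. T' \<subseteq> om T}. c T' * ind Nd T' x) \<noteq> 0" using assms(2) by simp
  then obtain T' where "T' \<in> {T' \<in> MH. T' \<subseteq> om T}" "c T' * ind Nd T' x \<noteq> 0"
    by (meson sum.not_neutral_contains_not_neutral)
  then show ?thesis by (auto simp: ind_def split: if_splits)
qed

lemma g_P: "\<exists>P. \<forall>T\<in>MH. g T = (\<lambda>x. \<Sum>T'\<in>MH. P T T' * ind Nd T' x)"
proof -
  have "\<forall>T\<in>MH. \<exists>p. g T = (\<lambda>x. \<Sum>T'\<in>MH. p T' * ind Nd T' x)"
  proof
    fix T assume T: "T \<in> MH"
    have "g T \<in> P0 Nd H (om T)" using smin T by (simp add: slod_min_def Let_def)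
    then obtain c where c: "g T = (\<lambda>x. \<Sum>T'\<in>{T' \<in> MH. T' \<subseteq> om T}. c T' * ind Nd T' x)"
      by (auto simp: P0_def)
    define p where "p T' = (if T' \<subseteq> om T then c T' else 0)" for T'
    have "g T = (\<lambda>x. \<Sum>T'\<in>MH. p T' * ind Nd T' x)"
    proof
      fix x
      have "(\<Sum>T'\<in>MH. p T' * ind Nd T' x) = (\<Sum>T'\<in>MH. if T' \<subseteq> om T then c T' * ind Nd T' x else 0)"
        by (rule sum.cong) (auto simp: p_def)
      also have "\<dots> = (\<Sum>T'\<in>{T' \<in> MH. T' \<subseteq> om T}. c T' * ind Nd T' x)"
        using mfin by (simp add: sum.inter_filter)
      finally show "g T x = (\<Sum>T'\<in>MH. p T' * ind Nd T' x)" using c by simp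
    qed
    then show "\<exists>p. g T = (\<lambda>x. \<Sum>T'\<in>MH. p T' * ind Nd T' x)" by blast
  qed
  then show ?thesis by (rule bchoice)
qed

lemma phi_V: "phi T \<in> Vsp Nd \<Gamma>" and phi_supp: "phi T x \<noteq> 0 \<Longrightarrow> x \<in> Nd \<and> x \<in> om T"
  using Kinv_loc_prop[of "om T" "g T"] by (auto simp: Vloc_eq Vsp_eq)

lemma extN_mem: "E x y \<Longrightarrow> x \<in> Nd \<inter> \<omega> \<or> y \<in> Nd \<inter> \<omega> \<Longrightarrow> x \<in> extN E Nd \<omega> \<and> y \<in> extN E Nd \<omega>"
  using Ein by (auto simp: extN_def)

lemma Bbound:
  assumes T: "T \<in> MH" and v: "v \<in> Vsp Nd \<Gamma>"
  shows "\<bar>Kform \<gamma> E Nd UNIV (phi T) v - Mform E Nd UNIV (g T) v\<bar> \<le> Vnorm E Nd (om T) (RR T) * Vnorm E Nd (om T) v"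
proof -
  define w where "w x = (if x \<in> extN E Nd (om T) then v x else 0)" for x
  have wV: "w \<in> Vtilde E Nd \<Gamma> (om T)" using v by (auto simp: Vtilde_eq Vsp_eq w_def)
  have K: "Kform \<gamma> E Nd UNIV (phi T) v = Kform \<gamma> E Nd UNIV (phi T) w"
    unfolding Kform_def
  proof (intro sum.cong refl arg_cong[where f="\<lambda>t. (1/2) * t"])
    fix x y assume "x \<in> Nd \<inter> UNIV" "y \<in> {y. E x y}"
    then have E: "E x y" by simp
    show "\<gamma> x y * (phi T x - phi T y) * (v x - v y) / dist x y = \<gamma> x y * (phi T x - phi T y) * (w x - w y) / dist x y"
    proof (cases "phi T x = 0 \<and> phi T y = 0")
      case True then show ?thesis by simp
    next
      case False
      then have "x \<in> Nd \<inter> om T \<or> y \<in> Nd \<inter> om T" using phi_supp by blast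
      then have "x \<in> extN E Nd (om T) \<and> y \<in> extN E Nd (om T)" using extN_mem E by blast
      then show ?thesis by (simp add: w_def)
    qed
  qed
  have M: "Mform E Nd UNIV (g T) v = Mform E Nd UNIV (g T) w"
  proof (rule Mform_cong2, intro ballI impI)
    fix x assume "x \<in> Nd \<inter> UNIV" "g T x \<noteq> 0"
    then have "x \<in> om T" using g_supp T by blast
    then show "v x = w x" by (simp add: w_def extN_def)
  qed
  have eqR: "GV (om T) (RR T) w = Kform \<gamma> E Nd UNIV (phi T) w - Mform E Nd UNIV (g T) w"
    using Rop_prop[of "om T" "g T"] wV by blast
  have ww: "GV (om T) w w = GV (om T) v v"
  proof (rule gf_cong, intro ballI conjI allI impI)
    fix x assume x: "x \<in> Nd \<inter> om T"
    then show "w x = v x" "w x = v x" by (auto simp: w_def extN_def)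
    fix y assume "E x y"
    then have "y \<in> extN E Nd (om T)" using extN_mem x by blast
    then show "w y = v y" "w y = v y" by (auto simp: w_def)
  qed
  have "\<bar>Kform \<gamma> E Nd UNIV (phi T) v - Mform E Nd UNIV (g T) v\<bar> = \<bar>GV (om T) (RR T) w\<bar>"
    using K M eqR by simp
  also have "\<dots> \<le> sqrt (GV (om T) (RR T) (RR T)) * sqrt (GV (om T) w w)" by (rule gf_CS_abs[OF nnV])
  also have "\<dots> = Vnorm E Nd (om T) (RR T) * Vnorm E Nd (om T) v" using ww by (simp add: Vnorm_gf)
  finally show ?thesis .
qed

end


lemma sum_CS_sqrt:
  fixes a b :: "'i \<Rightarrow> real"
  shows "(\<Sum>i\<in>I. a i * b i) \<le> sqrt (\<Sum>i\<in>I. (a i)^2) * sqrt (\<Sum>i\<in>I. (b i)^2)"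
proof -
  have "(\<Sum>i\<in>I. a i * b i) \<le> sqrt ((\<Sum>i\<in>I. a i * b i)^2)" by simp
  also have "\<dots> \<le> sqrt ((\<Sum>i\<in>I. (a i)^2) * (\<Sum>i\<in>I. (b i)^2))"
    by (rule real_sqrt_le_mono[OF Cauchy_Schwarz_ineq_sum])
  also have "\<dots> = sqrt (\<Sum>i\<in>I. (a i)^2) * sqrt (\<Sum>i\<in>I. (b i)^2)" by (rule real_sqrt_mult)
  finally show ?thesis .
qed

context slod
begin

definition coef where "coef f T = Mform E Nd T f (\<lambda>_. 1) / (semi (Mform E Nd T) (\<lambda>_. 1))^2"

lemma coef_eq: "coef f T = Mform E Nd T f (\<lambda>_. 1) / Mform E Nd T (\<lambda>_. 1) (\<lambda>_. 1)"
  unfolding coef_def using semi_sq[of "Mform E Nd T" "\<lambda>_. 1", OF Mnn] by simp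

lemma PiH_eq: "PiH E Nd H f = (\<lambda>x. \<Sum>T\<in>MH. coef f T * ind Nd T x)"
  by (simp add: PiH_def coef_def)

lemma Pi_on:
  assumes "T \<in> MH" "x \<in> Nd" "x \<in> T"
  shows "PiH E Nd H f x = coef f T"
proof -
  have "PiH E Nd H f x = (\<Sum>T'\<in>MH. if T' = T then coef f T' else 0)"
    unfolding PiH_eq
  proof (rule sum.cong[OF refl])
    fix T' assume "T' \<in> MH"
    then show "coef f T' * ind Nd T' x = (if T' = T then coef f T' else 0)"
      using mdisj assms by (auto simp: ind_def)
  qed
  also have "\<dots> = coef f T" using mfin assms(1) by (simp add: sum.delta')
  finally show ?thesis .
qed

lemma Mconst1: "Mform E Nd \<omega> (\<lambda>x. c) w = c * Mform E Nd \<omega> (\<lambda>_. 1) w"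
  using gf_scale1[of "\<lambda>x y. dist x y" "\<lambda>_ _. 0" E Nd \<omega> c "\<lambda>_. 1" w] by (simp add: Mform_gf)
lemma Mconst2: "Mform E Nd \<omega> w (\<lambda>x. c) = c * Mform E Nd \<omega> w (\<lambda>_. 1)"
  using gf_scale2[of "\<lambda>x y. dist x y" "\<lambda>_ _. 0" E Nd \<omega> w c "\<lambda>_. 1"] by (simp add: Mform_gf)

lemma MCS: "\<bar>Mform E Nd \<omega> v w\<bar> \<le> sqrt (Mform E Nd \<omega> v v) * sqrt (Mform E Nd \<omega> w w)"
  unfolding Mform_gf by (rule gf_CS_abs[OF nnM])

lemma Mf1_zero:
  assumes "Mform E Nd T (\<lambda>_. 1) (\<lambda>_. 1) = 0"
  shows "Mform E Nd T f (\<lambda>_. 1) = 0"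
  using MCS[of T f "\<lambda>_. 1"] assms by simp

lemma orth0:
  assumes "T \<in> MH"
  shows "Mform E Nd T (\<lambda>x. f x - coef f T) (\<lambda>_. 1) = 0"
proof -
  have "Mform E Nd T (\<lambda>x. f x - coef f T) (\<lambda>_. 1) = Mform E Nd T f (\<lambda>_. 1) - coef f T * Mform E Nd T (\<lambda>_. 1) (\<lambda>_. 1)"
    using gf_diff1[of "\<lambda>x y. dist x y" "\<lambda>_ _. 0" E Nd T f "\<lambda>_. coef f T" "\<lambda>_. 1"] Mconst1[of T "coef f T" "\<lambda>_. 1"]
    by (simp add: Mform_gf)
  also have "\<dots> = 0"
  proof (cases "Mform E Nd T (\<lambda>_. 1) (\<lambda>_. 1) = 0")
    case True then show ?thesis using Mf1_zero by simp
  next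
    case False then show ?thesis by (simp add: coef_eq)
  qed
  finally show ?thesis .
qed

lemma Pi_cong:
  assumes "T \<in> MH"
  shows "Mform E Nd T (\<lambda>x. f x - PiH E Nd H f x) w = Mform E Nd T (\<lambda>x. f x - coef f T) w"
  using Pi_on[OF assms] by (intro Mform_cong) auto

lemma orth:
  assumes "T \<in> MH"
  shows "Mform E Nd T (\<lambda>x. f x - PiH E Nd H f x) (\<lambda>_. 1) = 0"
  using Pi_cong[OF assms] orth0[OF assms] by simp

lemma gf_expand: "gf a b E Nd \<omega> (\<lambda>x. h x + k * u x) (\<lambda>x. h x + k * u x)
   = gf a b E Nd \<omega> h h + 2 * k * gf a b E Nd \<omega> h u + k^2 * gf a b E Nd \<omega> u u"
  by (simp add: gf_add1 gf_add2 gf_scale1 gf_scale2 gf_sym[of a b E Nd \<omega> u h] power2_eq_square algebra_simps)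

lemma Mexpand: "Mform E Nd T (\<lambda>x. h x + k) (\<lambda>x. h x + k)
   = Mform E Nd T h h + 2 * k * Mform E Nd T h (\<lambda>_. 1) + k^2 * Mform E Nd T (\<lambda>_. 1) (\<lambda>_. 1)"
  using gf_expand[of "\<lambda>x y. dist x y" "\<lambda>_ _. 0" T h k "\<lambda>_. 1"] by (simp add: Mform_gf)

lemma best:
  assumes "T \<in> MH"
  shows "Mform E Nd T (\<lambda>x. f x - PiH E Nd H f x) (\<lambda>x. f x - PiH E Nd H f x) \<le> Mform E Nd T (\<lambda>x. f x - c) (\<lambda>x. f x - c)"
proof -
  define h where "h = (\<lambda>x. f x - coef f T)"
  have "Mform E Nd T (\<lambda>x. f x - PiH E Nd H f x) (\<lambda>x. f x - PiH E Nd H f x) = Mform E Nd T h h"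
    using Pi_on[OF assms] by (intro Mform_cong) (auto simp: h_def)
  also have "\<dots> \<le> Mform E Nd T h h + 2 * (coef f T - c) * Mform E Nd T h (\<lambda>_. 1) + (coef f T - c)^2 * Mform E Nd T (\<lambda>_. 1) (\<lambda>_. 1)"
    using orth0[OF assms, of f] Mnn[of T "\<lambda>_. 1"] by (simp add: h_def)
  also have "\<dots> = Mform E Nd T (\<lambda>x. h x + (coef f T - c)) (\<lambda>x. h x + (coef f T - c))" by (rule Mexpand[symmetric])
  also have "(\<lambda>x. h x + (coef f T - c)) = (\<lambda>x. f x - c)" by (auto simp: h_def)
  finally show ?thesis .
qed

lemma Pi_normT:
  assumes "T \<in> MH"
  shows "Mform E Nd T (PiH E Nd H f) (PiH E Nd H f) \<le> Mform E Nd T f f"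
proof -
  define h where "h = (\<lambda>x. f x - coef f T)"
  have "Mform E Nd T (PiH E Nd H f) (PiH E Nd H f) = Mform E Nd T (\<lambda>_. coef f T) (\<lambda>_. coef f T)"
    using Pi_on[OF assms] by (intro Mform_cong) auto
  also have "\<dots> = (coef f T)^2 * Mform E Nd T (\<lambda>_. 1) (\<lambda>_. 1)"
    using Mconst1[of T "coef f T"] Mconst2[of T "\<lambda>_. 1" "coef f T"] by (simp add: power2_eq_square)
  also have "\<dots> \<le> Mform E Nd T h h + 2 * coef f T * Mform E Nd T h (\<lambda>_. 1) + (coef f T)^2 * Mform E Nd T (\<lambda>_. 1) (\<lambda>_. 1)"
    using orth0[OF assms, of f] Mnn[of T h] by (simp add: h_def)
  also have "\<dots> = Mform E Nd T (\<lambda>x. h x + coef f T) (\<lambda>x. h x + coef f T)" by (rule Mexpand[symmetric])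
  also have "(\<lambda>x. h x + coef f T) = f" by (auto simp: h_def)
  finally show ?thesis .
qed

lemma Pi_norm: "Mform E Nd UNIV (PiH E Nd H f) (PiH E Nd H f) \<le> Mform E Nd UNIV f f"
  unfolding Mpart[of "PiH E Nd H f"] Mpart[of f] by (rule sum_mono[OF Pi_normT])

lemma count_l: "x \<in> Nd \<Longrightarrow> card {T\<in>MH. x \<in> patchn H l' T} \<le> (2 * l' + 1) ^ CARD('n)"
  using count_patchn[OF HN N1] NdOmega by blast

lemma count3: "x \<in> Nd \<Longrightarrow> card {T\<in>MH. x \<in> patch H T} \<le> 3 ^ CARD('n)"
  using count_l[of x 1] by (simp add: patchn_def)

lemma Lpatch_sum: "(\<Sum>T\<in>MH. Lform E Nd (patch H T) z z) \<le> 3 ^ CARD('n) * Lform E Nd UNIV z z"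
proof -
  have "(\<Sum>T\<in>MH. gf (\<lambda>_ _. 0) (\<lambda>x y. 1 / dist x y) E Nd (patch H T) z z)
     \<le> real (3 ^ CARD('n)) * gf (\<lambda>_ _. 0) (\<lambda>x y. 1 / dist x y) E Nd UNIV z z"
    by (rule gf_count[OF nnL mfin finNd]) (use count3 in blast)
  then show ?thesis by (simp add: Lform_gf)
qed

lemma poinc_est:
  assumes z: "z \<in> hatV Nd"
  shows "\<bar>Mform E Nd UNIV (\<lambda>x. f x - PiH E Nd H f x) z\<bar>
     \<le> \<mu> * H * sqrt (3 ^ CARD('n)) * sqrt (Mform E Nd UNIV (\<lambda>x. f x - PiH E Nd H f x) (\<lambda>x. f x - PiH E Nd H f x))
        * sqrt (Lform E Nd UNIV z z)"
proof -
  let ?e = "\<lambda>x. f x - PiH E Nd H f x"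
  have "\<forall>T\<in>MH. \<exists>c. semi (Mform E Nd T) (\<lambda>x. z x - c) \<le> \<mu> * H * semi (Lform E Nd (patch H T)) z"
    using pc z by blast
  then obtain cz where cz: "\<forall>T\<in>MH. semi (Mform E Nd T) (\<lambda>x. z x - cz T) \<le> \<mu> * H * semi (Lform E Nd (patch H T)) z"
    by (metis bchoice)
  have termT: "\<bar>Mform E Nd T ?e z\<bar> \<le> \<mu> * H * (sqrt (Mform E Nd T ?e ?e) * sqrt (Lform E Nd (patch H T) z z))"
    if T: "T \<in> MH" for T
  proof -
    have "Mform E Nd T ?e (\<lambda>x. z x - cz T) = Mform E Nd T ?e z - cz T * Mform E Nd T ?e (\<lambda>_. 1)"
      using gf_diff2[of "\<lambda>x y. dist x y" "\<lambda>_ _. 0" E Nd T ?e z "\<lambda>_. cz T"] Mconst2[of T ?e "cz T"]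
      by (simp add: Mform_gf)
    then have eq: "Mform E Nd T ?e z = Mform E Nd T ?e (\<lambda>x. z x - cz T)" using orth[OF T] by simp
    have "\<bar>Mform E Nd T ?e z\<bar> \<le> sqrt (Mform E Nd T ?e ?e) * sqrt (Mform E Nd T (\<lambda>x. z x - cz T) (\<lambda>x. z x - cz T))"
      unfolding eq by (rule MCS)
    also have "\<dots> \<le> sqrt (Mform E Nd T ?e ?e) * (\<mu> * H * sqrt (Lform E Nd (patch H T) z z))"
      using cz T Mnn by (intro mult_left_mono) (auto simp: semi_def)
    finally show ?thesis by (simp add: mult_ac)
  qed
  have "\<bar>Mform E Nd UNIV ?e z\<bar> = \<bar>\<Sum>T\<in>MH. Mform E Nd T ?e z\<bar>" by (simp add: Mpart)
  also have "\<dots> \<le> (\<Sum>T\<in>MH. \<bar>Mform E Nd T ?e z\<bar>)" by (rule sum_abs)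
  also have "\<dots> \<le> (\<Sum>T\<in>MH. \<mu> * H * (sqrt (Mform E Nd T ?e ?e) * sqrt (Lform E Nd (patch H T) z z)))"
    by (rule sum_mono[OF termT])
  also have "\<dots> = \<mu> * H * (\<Sum>T\<in>MH. sqrt (Mform E Nd T ?e ?e) * sqrt (Lform E Nd (patch H T) z z))"
    by (simp add: sum_distrib_left)
  also have "\<dots> \<le> \<mu> * H * (sqrt (\<Sum>T\<in>MH. (sqrt (Mform E Nd T ?e ?e))^2) * sqrt (\<Sum>T\<in>MH. (sqrt (Lform E Nd (patch H T) z z))^2))"
    using mupos Hpos by (intro mult_left_mono sum_CS_sqrt) auto
  also have "(\<Sum>T\<in>MH. (sqrt (Mform E Nd T ?e ?e))^2) = Mform E Nd UNIV ?e ?e"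
    using Mnn by (simp add: Mpart)
  also have "(\<Sum>T\<in>MH. (sqrt (Lform E Nd (patch H T) z z))^2) = (\<Sum>T\<in>MH. Lform E Nd (patch H T) z z)"
    using Lnn by simp
  also have "sqrt (\<Sum>T\<in>MH. Lform E Nd (patch H T) z z) \<le> sqrt (3 ^ CARD('n)) * sqrt (Lform E Nd UNIV z z)"
    using Lpatch_sum by (simp add: real_sqrt_mult[symmetric])
  then have "\<mu> * H * (sqrt (Mform E Nd UNIV ?e ?e) * sqrt (\<Sum>T\<in>MH. Lform E Nd (patch H T) z z))
     \<le> \<mu> * H * (sqrt (Mform E Nd UNIV ?e ?e) * (sqrt (3 ^ CARD('n)) * sqrt (Lform E Nd UNIV z z)))"
    using mupos Hpos Mnn by (intro mult_left_mono) auto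
  finally show ?thesis by (simp add: mult_ac)
qed

end


context slod
begin

lemma gsum_expand:
  assumes P: "\<forall>T\<in>MH. g T = (\<lambda>x. \<Sum>T'\<in>MH. P T T' * ind Nd T' x)"
  shows "(\<lambda>x. \<Sum>T\<in>MH. c T * g T x) = (\<lambda>x. \<Sum>T'\<in>MH. (\<Sum>T\<in>MH. P T T' * c T) * ind Nd T' x)"
proof
  fix x
  have "(\<Sum>T\<in>MH. c T * g T x) = (\<Sum>T\<in>MH. c T * (\<Sum>T'\<in>MH. P T T' * ind Nd T' x))"
    using P by (intro sum.cong refl) simp
  also have "\<dots> = (\<Sum>T\<in>MH. \<Sum>T'\<in>MH. P T T' * c T * ind Nd T' x)"
    by (simp add: sum_distrib_left mult_ac)
  also have "\<dots> = (\<Sum>T'\<in>MH. \<Sum>T\<in>MH. P T T' * c T * ind Nd T' x)" by (rule sum.swap)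
  also have "\<dots> = (\<Sum>T'\<in>MH. (\<Sum>T\<in>MH. P T T' * c T) * ind Nd T' x)"
    by (simp add: sum_distrib_right)
  finally show "(\<Sum>T\<in>MH. c T * g T x) = (\<Sum>T'\<in>MH. (\<Sum>T\<in>MH. P T T' * c T) * ind Nd T' x)" .
qed

lemma riesz_low: "(\<Sum>T\<in>MH. (c T)^2) \<le> Cr * Mform E Nd UNIV (\<lambda>x. \<Sum>T\<in>MH. c T * g T x) (\<lambda>x. \<Sum>T\<in>MH. c T * g T x)"
proof -
  have Cr: "Cr > 0" and r: "(1 / Cr) * (\<Sum>T\<in>MH. (c T)^2) \<le> (semi (Mform E Nd UNIV) (\<lambda>x. \<Sum>T\<in>MH. c T * g T x))^2"
    using riesz by (auto simp: riesz_assm_def)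
  have "(semi (Mform E Nd UNIV) (\<lambda>x. \<Sum>T\<in>MH. c T * g T x))^2 = Mform E Nd UNIV (\<lambda>x. \<Sum>T\<in>MH. c T * g T x) (\<lambda>x. \<Sum>T\<in>MH. c T * g T x)"
    by (rule semi_sq[of "Mform E Nd UNIV", OF Mnn])
  then show ?thesis using r Cr by (simp add: field_simps)
qed

lemma Crpos: "Cr > 0" using riesz by (simp add: riesz_assm_def)

lemma span_Pi: "\<exists>c. (\<lambda>x. \<Sum>T\<in>MH. c T * g T x) = PiH E Nd H f \<and> (\<Sum>T\<in>MH. (c T)^2) \<le> Cr * Mform E Nd UNIV f f"
proof -
  obtain P where P: "\<forall>T\<in>MH. g T = (\<lambda>x. \<Sum>T'\<in>MH. P T T' * ind Nd T' x)" using g_P by blast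
  have inj: "\<forall>c. (\<forall>T'\<in>MH. (\<Sum>T\<in>MH. P T T' * c T) = 0) \<longrightarrow> (\<forall>T\<in>MH. c T = 0)"
  proof (intro allI impI)
    fix c assume h: "\<forall>T'\<in>MH. (\<Sum>T\<in>MH. P T T' * c T) = 0"
    have "(\<lambda>x. \<Sum>T\<in>MH. c T * g T x) = (\<lambda>x. 0)" unfolding gsum_expand[OF P] using h by simp
    then have "(\<Sum>T\<in>MH. (c T)^2) \<le> 0" using riesz_low[of c] by (simp add: Mform_def)
    then have "\<forall>T\<in>MH. (c T)^2 = 0" using sum_nonneg_eq_0_iff[OF mfin, of "\<lambda>T. (c T)^2"]
      by (simp add: antisym sum_nonneg)
    then show "\<forall>T\<in>MH. c T = 0" by simp
  qed
  obtain c where c: "\<forall>T'\<in>MH. (\<Sum>T\<in>MH. P T T' * c T) = coef f T'"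
    using lin_solve[OF mfin mfin refl inj, of "coef f"] by blast
  have eq: "(\<lambda>x. \<Sum>T\<in>MH. c T * g T x) = PiH E Nd H f"
    unfolding gsum_expand[OF P] PiH_eq using c by (intro ext sum.cong refl) simp
  have "(\<Sum>T\<in>MH. (c T)^2) \<le> Cr * Mform E Nd UNIV (PiH E Nd H f) (PiH E Nd H f)"
    using riesz_low[of c] eq by simp
  also have "\<dots> \<le> Cr * Mform E Nd UNIV f f" using Crpos Pi_norm by (simp add: mult_left_mono)
  finally show ?thesis using eq by blast
qed

lemma VHl_V: "(\<lambda>x. \<Sum>T\<in>MH. c T * phi T x) \<in> Vsp Nd \<Gamma>"
  using phi_V by (auto simp: Vsp_eq intro!: sum.neutral)

lemma KL: "\<alpha> * Lform E Nd \<omega> v v \<le> Kform \<gamma> E Nd \<omega> v v"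
proof -
  have "\<alpha> * Lform E Nd \<omega> v v = (\<Sum>x\<in>Nd \<inter> \<omega>. (1/2) * (\<Sum>y\<in>{y. E x y}. \<alpha> * ((v x - v y) * (v x - v y) / dist x y)))"
    by (simp add: Lform_def sum_distrib_left mult_ac)
  also have "\<dots> \<le> Kform \<gamma> E Nd \<omega> v v"
    unfolding Kform_def
  proof (intro sum_mono mult_left_mono)
    fix x y assume "y \<in> {y. E x y}"
    then have "\<alpha> \<le> \<gamma> x y" "0 \<le> (v x - v y) * (v x - v y) / dist x y" using gb by auto
    then have "\<alpha> * ((v x - v y) * (v x - v y) / dist x y) \<le> \<gamma> x y * ((v x - v y) * (v x - v y) / dist x y)"
      by (rule mult_right_mono)
    then show "\<alpha> * ((v x - v y) * (v x - v y) / dist x y) \<le> \<gamma> x y * (v x - v y) * (v x - v y) / dist x y"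
      by (simp add: mult_ac)
  qed simp
  finally show ?thesis .
qed

lemma KU: "Kform \<gamma> E Nd \<omega> v v \<le> \<beta> * Lform E Nd \<omega> v v"
proof -
  have "\<beta> * Lform E Nd \<omega> v v = (\<Sum>x\<in>Nd \<inter> \<omega>. (1/2) * (\<Sum>y\<in>{y. E x y}. \<beta> * ((v x - v y) * (v x - v y) / dist x y)))"
    by (simp add: Lform_def sum_distrib_left mult_ac)
  moreover have "Kform \<gamma> E Nd \<omega> v v \<le> \<dots>"
    unfolding Kform_def
  proof (intro sum_mono mult_left_mono)
    fix x y assume "y \<in> {y. E x y}"
    then have "\<gamma> x y \<le> \<beta>" "0 \<le> (v x - v y) * (v x - v y) / dist x y" using gb by auto
    then have "\<gamma> x y * ((v x - v y) * (v x - v y) / dist x y) \<le> \<beta> * ((v x - v y) * (v x - v y) / dist x y)"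
      by (rule mult_right_mono)
    then show "\<gamma> x y * (v x - v y) * (v x - v y) / dist x y \<le> \<beta> * ((v x - v y) * (v x - v y) / dist x y)"
      by (simp add: mult_ac)
  qed simp
  ultimately show ?thesis by simp
qed

lemma sigma_ge: "T \<in> MH \<Longrightarrow> Vnorm E Nd (om T) (RR T) \<le> sigma \<gamma> E Nd \<Gamma> H l g"
  unfolding sigma_def using mfin by (intro Max_ge) auto

lemma sigma_nn: "0 \<le> sigma \<gamma> E Nd \<Gamma> H l g"
proof -
  have "MH \<noteq> {}" using Ndcover finNd net by (auto simp: network_def)
  then obtain T where "T \<in> MH" by blast
  then show ?thesis using sigma_ge[of T] by (smt (verit) Vnorm_def real_sqrt_ge_zero Mnn Lnn)
qed

lemma Bsum:
  assumes z: "z \<in> Vsp Nd \<Gamma>"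
  shows "\<bar>\<Sum>T\<in>MH. c T * (Kform \<gamma> E Nd UNIV (phi T) z - Mform E Nd UNIV (g T) z)\<bar>
    \<le> sigma \<gamma> E Nd \<Gamma> H l g * sqrt (\<Sum>T\<in>MH. (c T)^2) * sqrt (real ((2 * l + 1) ^ CARD('n)) * GV UNIV z z)"
proof -
  let ?s = "sigma \<gamma> E Nd \<Gamma> H l g"
  have "\<bar>\<Sum>T\<in>MH. c T * (Kform \<gamma> E Nd UNIV (phi T) z - Mform E Nd UNIV (g T) z)\<bar>
      \<le> (\<Sum>T\<in>MH. \<bar>c T * (Kform \<gamma> E Nd UNIV (phi T) z - Mform E Nd UNIV (g T) z)\<bar>)" by (rule sum_abs)
  also have "\<dots> \<le> (\<Sum>T\<in>MH. ?s * (\<bar>c T\<bar> * Vnorm E Nd (om T) z))"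
  proof (rule sum_mono)
    fix T assume T: "T \<in> MH"
    have "\<bar>c T * (Kform \<gamma> E Nd UNIV (phi T) z - Mform E Nd UNIV (g T) z)\<bar>
        = \<bar>c T\<bar> * \<bar>Kform \<gamma> E Nd UNIV (phi T) z - Mform E Nd UNIV (g T) z\<bar>" by (simp add: abs_mult)
    also have "\<dots> \<le> \<bar>c T\<bar> * (Vnorm E Nd (om T) (RR T) * Vnorm E Nd (om T) z)"
      by (rule mult_left_mono[OF Bbound[OF T z]]) simp
    also have "\<dots> \<le> \<bar>c T\<bar> * (?s * Vnorm E Nd (om T) z)"
      by (intro mult_left_mono mult_right_mono sigma_ge T) (auto simp: Vnorm_def intro!: add_nonneg_nonneg Mnn Lnn)
    finally show "\<bar>c T * (Kform \<gamma> E Nd UNIV (phi T) z - Mform E Nd UNIV (g T) z)\<bar> \<le> ?s * (\<bar>c T\<bar> * Vnorm E Nd (om T) z)"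
      by (simp add: mult_ac)
  qed
  also have "\<dots> = ?s * (\<Sum>T\<in>MH. \<bar>c T\<bar> * Vnorm E Nd (om T) z)" by (simp add: sum_distrib_left)
  also have "\<dots> \<le> ?s * (sqrt (\<Sum>T\<in>MH. \<bar>c T\<bar>^2) * sqrt (\<Sum>T\<in>MH. (Vnorm E Nd (om T) z)^2))"
    by (intro mult_left_mono sum_CS_sqrt sigma_nn)
  also have "(\<Sum>T\<in>MH. (Vnorm E Nd (om T) z)^2) = (\<Sum>T\<in>MH. GV (om T) z z)"
    using GVnn by (simp add: Vnorm_gf)
  also have "(\<Sum>T\<in>MH. GV (om T) z z) \<le> real ((2 * l + 1) ^ CARD('n)) * GV UNIV z z"
    by (rule gf_count[OF nnV mfin finNd]) (use count_l in blast)
  then have "?s * (sqrt (\<Sum>T\<in>MH. \<bar>c T\<bar>^2) * sqrt (\<Sum>T\<in>MH. GV (om T) z z))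
      \<le> ?s * (sqrt (\<Sum>T\<in>MH. \<bar>c T\<bar>^2) * sqrt (real ((2 * l + 1) ^ CARD('n)) * GV UNIV z z))"
    by (intro mult_left_mono sigma_nn) (auto intro: sum_nonneg)
  finally show ?thesis by (simp add: mult_ac)
qed

end


lemma le_sqrt_aux: "0 \<le> (a::real) \<Longrightarrow> 0 \<le> b \<Longrightarrow> a \<le> sqrt a * sqrt b \<Longrightarrow> a \<le> b"
proof -
  assume a: "0 \<le> a" and b: "0 \<le> b" and h: "a \<le> sqrt a * sqrt b"
  show "a \<le> b"
  proof (cases "a = 0")
    case True then show ?thesis using b by simp
  next
    case False
    then have sa: "sqrt a > 0" using a by simp
    have eq: "sqrt a * sqrt a = a" using a by simp
    have "sqrt a * sqrt a \<le> sqrt a * sqrt b" using h eq by linarith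
    then have "sqrt a \<le> sqrt b" by (rule mult_left_le_imp_le[OF _ sa])
    then show ?thesis using a b by simp
  qed
qed

lemma div_aux: "0 \<le> (L::real) \<Longrightarrow> 0 \<le> Q \<Longrightarrow> 0 < al \<Longrightarrow> al * L \<le> Q * sqrt L \<Longrightarrow> sqrt L \<le> Q / al"
proof -
  assume L: "0 \<le> L" and Q: "0 \<le> Q" and al: "0 < al" and h: "al * L \<le> Q * sqrt L"
  show "sqrt L \<le> Q / al"
  proof (cases "L = 0")
    case True then show ?thesis using Q al by simp
  next
    case False
    then have s: "sqrt L > 0" using L by simp
    have "al * sqrt L * sqrt L \<le> Q * sqrt L" using h L by (simp add: mult.assoc)
    then have "al * sqrt L \<le> Q" using s by simp
    then show ?thesis using al by (simp add: field_simps)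
  qed
qed

context slod
begin

lemma bpos: "0 < \<beta>"
proof -
  obtain z where "z \<in> Nd" using gam by blast
  then obtain y where "E z y" using nbr by blast
  then show ?thesis using gb apos by force
qed

lemma main_est:
  assumes uh: "uh \<in> VHl \<gamma> E Nd \<Gamma> H l g"
    and gal: "\<forall>v\<in>VHl \<gamma> E Nd \<Gamma> H l g. Kform \<gamma> E Nd UNIV uh v = Mform E Nd UNIV f v"
  shows "sqrt (Lform E Nd UNIV (\<lambda>x. Kinv \<gamma> E Nd \<Gamma> f x - uh x) (\<lambda>x. Kinv \<gamma> E Nd \<Gamma> f x - uh x))
    \<le> sqrt (\<beta> / \<alpha>) / \<alpha> * (\<mu> * H * sqrt (3 ^ CARD('n)) * sqrt (Mform E Nd UNIV (\<lambda>x. f x - PiH E Nd H f x) (\<lambda>x. f x - PiH E Nd H f x))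
       + sigma \<gamma> E Nd \<Gamma> H l g * sqrt (Cr * Mform E Nd UNIV f f) * sqrt (real ((2 * l + 1) ^ CARD('n)) * (Cfr^2 + 1)))"
proof -
  define u where "u = Kinv \<gamma> E Nd \<Gamma> f"
  have uV: "u \<in> Vsp Nd \<Gamma>" and uK: "\<forall>z\<in>Vsp Nd \<Gamma>. Kform \<gamma> E Nd UNIV u z = Mform E Nd UNIV f z"
    using Kinv_prop[of f] by (auto simp: u_def)
  obtain c where cg: "(\<lambda>x. \<Sum>T\<in>MH. c T * g T x) = PiH E Nd H f" and cb: "(\<Sum>T\<in>MH. (c T)^2) \<le> Cr * Mform E Nd UNIV f f"
    using span_Pi[of f] by blast
  define v where "v = (\<lambda>x. \<Sum>T\<in>MH. c T * phi T x)"
  have vV: "v \<in> Vsp Nd \<Gamma>" unfolding v_def by (rule VHl_V)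
  define w where "w = (\<lambda>x. u x - v x)"
  have wV: "w \<in> Vsp Nd \<Gamma>" using uV vV by (auto simp: w_def Vsp_eq)
  define e where "e = (\<lambda>x. f x - PiH E Nd H f x)"
  let ?S = "\<lambda>z. \<Sum>T\<in>MH. c T * (Kform \<gamma> E Nd UNIV (phi T) z - Mform E Nd UNIV (g T) z)"
  have Kw: "Kform \<gamma> E Nd UNIV w z = Mform E Nd UNIV e z - ?S z" if z: "z \<in> Vsp Nd \<Gamma>" for z
  proof -
    have "Kform \<gamma> E Nd UNIV w z = Kform \<gamma> E Nd UNIV u z - Kform \<gamma> E Nd UNIV v z"
      unfolding w_def Kform_gf by (rule gf_diff1)
    also have "Kform \<gamma> E Nd UNIV v z = (\<Sum>T\<in>MH. c T * Kform \<gamma> E Nd UNIV (phi T) z)"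
      unfolding v_def Kform_gf by (rule gf_sum1)
    also have "Kform \<gamma> E Nd UNIV u z = Mform E Nd UNIV f z" using uK z by blast
    also have "Mform E Nd UNIV e z = Mform E Nd UNIV f z - Mform E Nd UNIV (PiH E Nd H f) z"
      unfolding e_def Mform_gf by (rule gf_diff1)
    moreover have "Mform E Nd UNIV (PiH E Nd H f) z = (\<Sum>T\<in>MH. c T * Mform E Nd UNIV (g T) z)"
      unfolding cg[symmetric] Mform_gf by (rule gf_sum1)
    ultimately show ?thesis by (simp add: right_diff_distrib sum_subtractf)
  qed
  have Lw0: "0 \<le> Lform E Nd UNIV w w" by (rule Lnn)
  have Mw: "Mform E Nd UNIV w w \<le> Cfr^2 * Lform E Nd UNIV w w"
  proof -
    have "sqrt (Mform E Nd UNIV w w) \<le> Cfr * sqrt (Lform E Nd UNIV w w)" using fr wV by (simp add: semi_def)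
    then have "(sqrt (Mform E Nd UNIV w w))^2 \<le> (Cfr * sqrt (Lform E Nd UNIV w w))^2"
      by (rule power_mono) (simp add: Mnn)
    then show ?thesis using Mnn Lw0 by (simp add: power_mult_distrib)
  qed
  have GVw: "GV UNIV w w \<le> (Cfr^2 + 1) * Lform E Nd UNIV w w"
    using Mw MLsum_gf[of E Nd UNIV w w] by (simp add: algebra_simps)
  let ?Nl = "real ((2 * l + 1) ^ CARD('n))"
  let ?s = "sigma \<gamma> E Nd \<Gamma> H l g"
  define Q where "Q = \<mu> * H * sqrt (3 ^ CARD('n)) * sqrt (Mform E Nd UNIV e e)
       + ?s * sqrt (Cr * Mform E Nd UNIV f f) * sqrt (?Nl * (Cfr^2 + 1))"
  have Q0: "0 \<le> Q" unfolding Q_def using mupos Hpos sigma_nn Mnn[of UNIV e] Mnn[of UNIV f] Crpos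
    by (intro add_nonneg_nonneg mult_nonneg_nonneg) auto
  have wH: "w \<in> hatV Nd" using wV by (simp add: Vsp_def)
  have S1: "\<bar>Mform E Nd UNIV e w\<bar> \<le> \<mu> * H * sqrt (3 ^ CARD('n)) * sqrt (Mform E Nd UNIV e e) * sqrt (Lform E Nd UNIV w w)"
    unfolding e_def by (rule poinc_est[OF wH])
  have "\<bar>?S w\<bar> \<le> ?s * sqrt (\<Sum>T\<in>MH. (c T)^2) * sqrt (?Nl * GV UNIV w w)" by (rule Bsum[OF wV])
  also have "\<dots> \<le> ?s * sqrt (Cr * Mform E Nd UNIV f f) * sqrt (?Nl * ((Cfr^2 + 1) * Lform E Nd UNIV w w))"
    using cb GVw sigma_nn GVnn[of UNIV w] Mnn[of UNIV f] Crpos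
    by (intro mult_mono mult_left_mono real_sqrt_le_mono) (auto intro: sum_nonneg)
  also have "\<dots> = ?s * sqrt (Cr * Mform E Nd UNIV f f) * sqrt (?Nl * (Cfr^2 + 1)) * sqrt (Lform E Nd UNIV w w)"
    by (simp add: real_sqrt_mult mult_ac)
  finally have S2: "\<bar>?S w\<bar> \<le> ?s * sqrt (Cr * Mform E Nd UNIV f f) * sqrt (?Nl * (Cfr^2 + 1)) * sqrt (Lform E Nd UNIV w w)" .
  have "\<alpha> * Lform E Nd UNIV w w \<le> Kform \<gamma> E Nd UNIV w w" by (rule KL)
  also have "\<dots> = Mform E Nd UNIV e w - ?S w" by (rule Kw[OF wV])
  also have "\<dots> \<le> \<bar>Mform E Nd UNIV e w\<bar> + \<bar>?S w\<bar>" by linarith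
  also have "\<dots> \<le> Q * sqrt (Lform E Nd UNIV w w)" using S1 S2 by (simp add: Q_def algebra_simps)
  finally have "\<alpha> * Lform E Nd UNIV w w \<le> Q * sqrt (Lform E Nd UNIV w w)" .
  then have wb: "sqrt (Lform E Nd UNIV w w) \<le> Q / \<alpha>" using div_aux Lw0 Q0 apos by blast
  (* Cea *)
  obtain c' where c': "uh = (\<lambda>x. \<Sum>T\<in>MH. c' T * phi T x)" using uh by (auto simp: VHl_def)
  define e2 where "e2 = (\<lambda>x. u x - uh x)"
  define d where "d = (\<lambda>x. v x - uh x)"
  have dH: "d \<in> VHl \<gamma> E Nd \<Gamma> H l g"
  proof -
    have "d = (\<lambda>x. \<Sum>T\<in>MH. (c T - c' T) * phi T x)"
      unfolding d_def v_def c' by (simp add: left_diff_distrib sum_subtractf)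
    then show ?thesis by (auto simp: VHl_def)
  qed
  have dV: "d \<in> Vsp Nd \<Gamma>" using dH VHl_V by (auto simp: VHl_def)
  have Ke2d: "Kform \<gamma> E Nd UNIV e2 d = 0"
  proof -
    have "Kform \<gamma> E Nd UNIV e2 d = Kform \<gamma> E Nd UNIV u d - Kform \<gamma> E Nd UNIV uh d"
      unfolding e2_def Kform_gf by (rule gf_diff1)
    then show ?thesis using uK dV gal dH by simp
  qed
  have e2wd: "e2 = (\<lambda>x. w x + d x)" by (auto simp: e2_def w_def d_def)
  have "Kform \<gamma> E Nd UNIV e2 e2 = Kform \<gamma> E Nd UNIV e2 w + Kform \<gamma> E Nd UNIV e2 d"
    unfolding Kform_gf by (subst (2) e2wd) (rule gf_add2)
  also have "\<dots> = Kform \<gamma> E Nd UNIV e2 w" using Ke2d by simp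
  also have "\<dots> \<le> sqrt (Kform \<gamma> E Nd UNIV e2 e2) * sqrt (Kform \<gamma> E Nd UNIV w w)"
    using gf_CS_abs[OF nnK, of Nd UNIV e2 w] by (simp add: Kform_gf)
  finally have "Kform \<gamma> E Nd UNIV e2 e2 \<le> Kform \<gamma> E Nd UNIV w w" using le_sqrt_aux Knn by blast
  then have "\<alpha> * Lform E Nd UNIV e2 e2 \<le> \<beta> * Lform E Nd UNIV w w" using KL[of UNIV e2] KU[of UNIV w] by linarith
  then have "Lform E Nd UNIV e2 e2 \<le> (\<beta> / \<alpha>) * Lform E Nd UNIV w w" using apos by (simp add: field_simps)
  then have "sqrt (Lform E Nd UNIV e2 e2) \<le> sqrt (\<beta> / \<alpha>) * sqrt (Lform E Nd UNIV w w)"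
    by (simp add: real_sqrt_mult[symmetric])
  also have "\<dots> \<le> sqrt (\<beta> / \<alpha>) * (Q / \<alpha>)" by (rule mult_left_mono[OF wb]) (use bpos apos in simp)
  finally show ?thesis by (simp add: e2_def u_def Q_def e_def)
qed

end


context slod
begin

lemma pi_err: "Mform E Nd UNIV (\<lambda>x. f x - PiH E Nd H f x) (\<lambda>x. f x - PiH E Nd H f x)
   \<le> (\<mu> * H)^2 * 3 ^ CARD('n) * Lform E Nd UNIV f f"
proof -
  define f' where "f' x = (if x \<in> Nd then f x else 0)" for x
  have f'H: "f' \<in> hatV Nd" by (simp add: hatV_def f'_def)
  have Lf': "Lform E Nd \<omega> f' f' = Lform E Nd \<omega> f f" for \<omega>
    unfolding Lform_gf using Ein by (intro gf_cong) (auto simp: f'_def)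
  have termT: "Mform E Nd T (\<lambda>x. f x - PiH E Nd H f x) (\<lambda>x. f x - PiH E Nd H f x)
      \<le> (\<mu> * H)^2 * Lform E Nd (patch H T) f f" if T: "T \<in> MH" for T
  proof -
    obtain c where c: "semi (Mform E Nd T) (\<lambda>x. f' x - c) \<le> \<mu> * H * semi (Lform E Nd (patch H T)) f'"
      using pc T f'H by blast
    have "Mform E Nd T (\<lambda>x. f x - PiH E Nd H f x) (\<lambda>x. f x - PiH E Nd H f x) \<le> Mform E Nd T (\<lambda>x. f x - c) (\<lambda>x. f x - c)"
      by (rule best[OF T])
    also have "\<dots> = Mform E Nd T (\<lambda>x. f' x - c) (\<lambda>x. f' x - c)" by (intro Mform_cong) (auto simp: f'_def)
    also have "\<dots> = (semi (Mform E Nd T) (\<lambda>x. f' x - c))^2" by (rule semi_sq[of "Mform E Nd T", symmetric, OF Mnn])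
    also have "\<dots> \<le> (\<mu> * H * semi (Lform E Nd (patch H T)) f')^2"
      by (rule power_mono[OF c]) (simp add: semi_def Mnn)
    also have "\<dots> = (\<mu> * H)^2 * Lform E Nd (patch H T) f f"
      using Lnn by (simp add: power_mult_distrib semi_def Lf')
    finally show ?thesis .
  qed
  have "Mform E Nd UNIV (\<lambda>x. f x - PiH E Nd H f x) (\<lambda>x. f x - PiH E Nd H f x)
      = (\<Sum>T\<in>MH. Mform E Nd T (\<lambda>x. f x - PiH E Nd H f x) (\<lambda>x. f x - PiH E Nd H f x))" by (rule Mpart)
  also have "\<dots> \<le> (\<Sum>T\<in>MH. (\<mu> * H)^2 * Lform E Nd (patch H T) f f)" by (rule sum_mono[OF termT])
  also have "\<dots> = (\<mu> * H)^2 * (\<Sum>T\<in>MH. Lform E Nd (patch H T) f f)" by (simp add: sum_distrib_left)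
  also have "\<dots> \<le> (\<mu> * H)^2 * (3 ^ CARD('n) * Lform E Nd UNIV f f)"
    by (rule mult_left_mono[OF Lpatch_sum]) simp
  finally show ?thesis by simp
qed

lemma pi_err_sqrt: "sqrt (Mform E Nd UNIV (\<lambda>x. f x - PiH E Nd H f x) (\<lambda>x. f x - PiH E Nd H f x))
   \<le> \<mu> * H * sqrt (3 ^ CARD('n)) * sqrt (Lform E Nd UNIV f f)"
proof -
  have "sqrt (Mform E Nd UNIV (\<lambda>x. f x - PiH E Nd H f x) (\<lambda>x. f x - PiH E Nd H f x))
     \<le> sqrt ((\<mu> * H)^2 * 3 ^ CARD('n) * Lform E Nd UNIV f f)" by (rule real_sqrt_le_mono[OF pi_err])
  also have "\<dots> = \<mu> * H * sqrt (3 ^ CARD('n)) * sqrt (Lform E Nd UNIV f f)"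
    using mupos Hpos by (simp add: real_sqrt_mult)
  finally show ?thesis .
qed

lemma Nl_bound: "sqrt (real ((2 * l + 1) ^ CARD('n))) \<le> sqrt (3 ^ CARD('n)) * real l powr (real CARD('n) / 2)"
proof -
  have l0: "real l > 0" using l1 by simp
  have "real (2 * l + 1) \<le> 3 * real l" using l1 by simp
  then have "real (2 * l + 1) ^ CARD('n) \<le> (3 * real l) ^ CARD('n)" by (rule power_mono) simp
  then have "real ((2 * l + 1) ^ CARD('n)) \<le> (3 * real l) ^ CARD('n)" by simp
  also have "\<dots> = 3 ^ CARD('n) * real l ^ CARD('n)" by (simp add: power_mult_distrib)
  finally have "sqrt (real ((2 * l + 1) ^ CARD('n))) \<le> sqrt (3 ^ CARD('n)) * sqrt (real l ^ CARD('n))"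
    by (simp add: real_sqrt_mult[symmetric])
  also have "sqrt (real l ^ CARD('n)) = real l powr (real CARD('n) / 2)"
  proof -
    have "real l ^ CARD('n) = real l powr real CARD('n)" using l0 by (simp add: powr_realpow)
    then have "sqrt (real l ^ CARD('n)) = (real l powr real CARD('n)) powr (1/2)"
      using l0 by (simp add: powr_half_sqrt)
    also have "\<dots> = real l powr (real CARD('n) / 2)" by (simp add: powr_powr)
    finally show ?thesis .
  qed
  finally show ?thesis .
qed

end


lemma arith1:
  fixes s p q a x Q :: real
  assumes "0 \<le> s" "0 \<le> p" "0 \<le> q" "0 \<le> a" "0 \<le> x" "Q \<le> s*p*a + s*q*x"
  shows "Q \<le> s*(p+q)*(a+x)"
proof -
  have "0 \<le> s * (p * x + q * a)" using assms by simp
  then show ?thesis using assms(6) by (simp add: algebra_simps)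
qed

lemma arith2:
  fixes C m a x b :: real
  assumes "0 \<le> C" "0 \<le> m" "0 \<le> a" "0 \<le> x" "0 \<le> b" "a \<le> m * b"
  shows "C * (a + x) \<le> (C * (1 + m)) * (b + x)"
proof -
  have "C * a \<le> C * (m * b)" using assms by (simp add: mult_left_mono)
  moreover have "0 \<le> C * b + C * m * x" using assms by simp
  ultimately show ?thesis by (simp add: algebra_simps)
qed

theorem mainTheorem9:
  fixes \<alpha> \<beta> \<mu> Cfr :: real
  assumes "0 < \<alpha>" "\<alpha> \<le> \<beta>" "0 < \<mu>" "0 < Cfr"
  shows "\<exists>C C'. C > 0 \<and> C' > 0 \<and>
    (\<forall>(Nd :: (real^'n) set) E \<Gamma> \<gamma> Hs H l Cr g f uh.
      network Nd E \<and> \<Gamma> \<subseteq> frontier Omega \<and> Nd \<inter> \<Gamma> \<noteq> {}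
      \<and> (\<forall>x y. E x y \<longrightarrow> \<gamma> x y = \<gamma> y x \<and> \<alpha> \<le> \<gamma> x y \<and> \<gamma> x y \<le> \<beta>)
      \<and> finite Hs \<and> (\<forall>H'\<in>Hs. \<exists>N::nat. N \<ge> 1 \<and> H' = 1 / real N) \<and> H \<in> Hs \<and> l \<ge> 1
      \<and> connectivity_assm Nd E Hs \<and> poincare_assm Nd E Hs \<mu>
      \<and> (\<forall>v\<in>Vsp Nd \<Gamma>. semi (Mform E Nd UNIV) v \<le> Cfr * semi (Lform E Nd UNIV) v)
      \<and> (\<forall>T\<in>mesh H. slod_min \<gamma> E Nd \<Gamma> H l T (g T))
      \<and> riesz_assm E Nd H Cr g
      \<and> uh \<in> VHl \<gamma> E Nd \<Gamma> H l g
      \<and> (\<forall>v\<in>VHl \<gamma> E Nd \<Gamma> H l g. Kform \<gamma> E Nd UNIV uh v = Mform E Nd UNIV f v)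
      \<longrightarrow>
      (let u = Kinv \<gamma> E Nd \<Gamma> f;
           \<sigma> = sigma \<gamma> E Nd \<Gamma> H l g;
           d = real CARD('n);
           nM = semi (Mform E Nd UNIV);
           nL = semi (Lform E Nd UNIV)
       in nL (\<lambda>x. u x - uh x)
            \<le> C * (H * nM (\<lambda>x. f x - PiH E Nd H f x) + sqrt Cr * real l powr (d / 2) * \<sigma> * nM f)
        \<and> C * (H * nM (\<lambda>x. f x - PiH E Nd H f x) + sqrt Cr * real l powr (d / 2) * \<sigma> * nM f)
            \<le> C' * (H^2 * nL f + sqrt Cr * real l powr (d / 2) * \<sigma> * nM f)))"
proof -
  define s3 where "s3 = sqrt (3 ^ CARD('n))"
  define C where "C = sqrt (\<beta> / \<alpha>) / \<alpha> * s3 * (\<mu> + sqrt (Cfr^2 + 1))"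
  define C' where "C' = C * (1 + \<mu> * s3)"
  have s3: "s3 > 0" by (simp add: s3_def)
  have bpos: "\<beta> > 0" using assms by linarith
  have c1: "0 < Cfr^2 + 1" by (smt (verit) zero_le_power2)
  have Cpos: "C > 0" unfolding C_def using assms bpos s3 c1 by (intro mult_pos_pos divide_pos_pos add_pos_pos) auto
  have C'pos: "C' > 0" unfolding C'_def using Cpos assms s3 by (simp add: add_pos_nonneg)
  show ?thesis
  proof (rule exI[of _ C], rule exI[of _ C'], intro conjI Cpos C'pos allI impI)
    fix Nd :: "(real^'n) set" and E \<Gamma> \<gamma> Hs H l Cr g f uh
    assume A: "network Nd E \<and> \<Gamma> \<subseteq> frontier Omega \<and> Nd \<inter> \<Gamma> \<noteq> {}
      \<and> (\<forall>x y. E x y \<longrightarrow> \<gamma> x y = \<gamma> y x \<and> \<alpha> \<le> \<gamma> x y \<and> \<gamma> x y \<le> \<beta>)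
      \<and> finite Hs \<and> (\<forall>H'\<in>Hs. \<exists>N::nat. N \<ge> 1 \<and> H' = 1 / real N) \<and> H \<in> Hs \<and> l \<ge> 1
      \<and> connectivity_assm Nd E Hs \<and> poincare_assm Nd E Hs \<mu>
      \<and> (\<forall>v\<in>Vsp Nd \<Gamma>. semi (Mform E Nd UNIV) v \<le> Cfr * semi (Lform E Nd UNIV) v)
      \<and> (\<forall>T\<in>mesh H. slod_min \<gamma> E Nd \<Gamma> H l T (g T))
      \<and> riesz_assm E Nd H Cr g
      \<and> uh \<in> VHl \<gamma> E Nd \<Gamma> H l g
      \<and> (\<forall>v\<in>VHl \<gamma> E Nd \<Gamma> H l g. Kform \<gamma> E Nd UNIV uh v = Mform E Nd UNIV f v)"
    obtain N :: nat where N: "N \<ge> 1" "H = 1 / real N" using A by blast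
    have pcH: "\<forall>T\<in>mesh H. \<forall>v\<in>hatV Nd. \<exists>c. semi (Mform E Nd T) (\<lambda>x. v x - c) \<le> \<mu> * H * semi (Lform E Nd (patch H T)) v"
      using A by (auto simp: poincare_assm_def)
    have "slod Nd E \<Gamma> \<gamma> \<alpha> \<beta> \<mu> Cfr H N l Cr g"
      unfolding slod_def slod_axioms_def netw_def using A N pcH assms by auto
    then interpret S: slod Nd E \<Gamma> \<gamma> \<alpha> \<beta> \<mu> Cfr H N l Cr g .
    let ?u = "Kinv \<gamma> E Nd \<Gamma> f"
    let ?\<sigma> = "sigma \<gamma> E Nd \<Gamma> H l g"
    let ?d = "real CARD('n)"
    let ?A1 = "semi (Mform E Nd UNIV) (\<lambda>x. f x - PiH E Nd H f x)"
    let ?nMf = "semi (Mform E Nd UNIV) f"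
    let ?nLf = "semi (Lform E Nd UNIV) f"
    let ?X = "sqrt Cr * real l powr (?d / 2) * ?\<sigma> * ?nMf"
    let ?Nl = "real ((2 * l + 1) ^ CARD('n))"
    have uhH: "uh \<in> VHl \<gamma> E Nd \<Gamma> H l g" and gal: "\<forall>v\<in>VHl \<gamma> E Nd \<Gamma> H l g. Kform \<gamma> E Nd UNIV uh v = Mform E Nd UNIV f v"
      using A by blast+
    have me: "sqrt (Lform E Nd UNIV (\<lambda>x. ?u x - uh x) (\<lambda>x. ?u x - uh x))
      \<le> sqrt (\<beta> / \<alpha>) / \<alpha> * (\<mu> * H * s3 * ?A1 + ?\<sigma> * sqrt (Cr * Mform E Nd UNIV f f) * sqrt (?Nl * (Cfr^2 + 1)))"
      using S.main_est[OF uhH gal] by (simp add: s3_def semi_def)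
    have sig0: "0 \<le> ?\<sigma>" by (rule S.sigma_nn)
    have Cr0: "0 < Cr" by (rule S.Crpos)
    have A10: "0 \<le> ?A1" and nMf0: "0 \<le> ?nMf" and nLf0: "0 \<le> ?nLf" by (simp_all add: semi_def S.Mnn S.Lnn)
    have X0: "0 \<le> ?X" using sig0 Cr0 nMf0 by simp
    have H0: "0 < H" by (rule S.Hpos)
    have t2: "?\<sigma> * sqrt (Cr * Mform E Nd UNIV f f) * sqrt (?Nl * (Cfr^2 + 1)) \<le> s3 * sqrt (Cfr^2 + 1) * ?X"
    proof -
      have "?\<sigma> * sqrt (Cr * Mform E Nd UNIV f f) * sqrt (?Nl * (Cfr^2 + 1))
          = (?\<sigma> * sqrt Cr * ?nMf * sqrt (Cfr^2 + 1)) * sqrt ?Nl"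
        by (simp add: real_sqrt_mult semi_def mult_ac)
      also have "\<dots> \<le> (?\<sigma> * sqrt Cr * ?nMf * sqrt (Cfr^2 + 1)) * (s3 * real l powr (?d / 2))"
        using S.Nl_bound sig0 Cr0 nMf0 by (intro mult_left_mono) (auto simp: s3_def)
      also have "\<dots> = s3 * sqrt (Cfr^2 + 1) * ?X" by (simp add: mult_ac)
      finally show ?thesis .
    qed
    have Qb: "\<mu> * H * s3 * ?A1 + ?\<sigma> * sqrt (Cr * Mform E Nd UNIV f f) * sqrt (?Nl * (Cfr^2 + 1))
        \<le> s3 * (\<mu> + sqrt (Cfr^2 + 1)) * (H * ?A1 + ?X)"
      by (rule arith1) (use s3 assms A10 H0 X0 t2 in \<open>auto simp: mult_ac\<close>)
    have ineq1: "semi (Lform E Nd UNIV) (\<lambda>x. ?u x - uh x) \<le> C * (H * ?A1 + ?X)"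
    proof -
      have "semi (Lform E Nd UNIV) (\<lambda>x. ?u x - uh x) \<le> sqrt (\<beta> / \<alpha>) / \<alpha> * (\<mu> * H * s3 * ?A1 + ?\<sigma> * sqrt (Cr * Mform E Nd UNIV f f) * sqrt (?Nl * (Cfr^2 + 1)))"
        using me by (simp add: semi_def)
      also have "\<dots> \<le> sqrt (\<beta> / \<alpha>) / \<alpha> * (s3 * (\<mu> + sqrt (Cfr^2 + 1)) * (H * ?A1 + ?X))"
        using Qb assms bpos by (intro mult_left_mono) auto
      also have "\<dots> = C * (H * ?A1 + ?X)" by (simp add: C_def mult_ac)
      finally show ?thesis .
    qed
    have a1: "H * ?A1 \<le> (\<mu> * s3) * (H^2 * ?nLf)"
    proof -
      have "?A1 \<le> \<mu> * H * s3 * ?nLf" using S.pi_err_sqrt[of f] by (simp add: semi_def s3_def)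
      then have "H * ?A1 \<le> H * (\<mu> * H * s3 * ?nLf)" using H0 by (simp add: mult_left_mono)
      then show ?thesis by (simp add: power2_eq_square mult_ac)
    qed
    have ineq2: "C * (H * ?A1 + ?X) \<le> C' * (H^2 * ?nLf + ?X)"
      unfolding C'_def by (rule arith2) (use Cpos assms s3 A10 H0 X0 nLf0 a1 in auto)
    show "let u = Kinv \<gamma> E Nd \<Gamma> f;
           \<sigma> = sigma \<gamma> E Nd \<Gamma> H l g;
           d = real CARD('n);
           nM = semi (Mform E Nd UNIV);
           nL = semi (Lform E Nd UNIV)
       in nL (\<lambda>x. u x - uh x)
            \<le> C * (H * nM (\<lambda>x. f x - PiH E Nd H f x) + sqrt Cr * real l powr (d / 2) * \<sigma> * nM f)
        \<and> C * (H * nM (\<lambda>x. f x - PiH E Nd H f x) + sqrt Cr * real l powr (d / 2) * \<sigma> * nM f)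
            \<le> C' * (H^2 * nL f + sqrt Cr * real l powr (d / 2) * \<sigma> * nM f)"
      unfolding Let_def using ineq1 ineq2 by blast
  qed
qed


end
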